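(* Let $t\in\mathbb{N}\setminus\{0,1\}$, let $K_1,\ldots,K_t,L_1,\ldots,L_t$ be bi--lattices with $|K_i|>2$ for all $i\in[1,t]$, let $K=\boxplus_{i=1}^tK_i$ and $L=\boxplus_{i=1}^t({\cal L}_2\oplus L_i\oplus{\cal L}_2)$. Then: (1) ${\rm Con}_{\mathbb{BI}}(K)=\{\boxplus_{i=1}^t\alpha_i\ :\ \alpha_i\in{\rm Con}_{\mathbb{BI}01}(K_i)\text{ for all }i\in[1,t]\}\cup\{\nabla_K\}\cong\left(\prod_{i=1}^t{\rm Con}_{\mathbb{BI}01}(K_i)\right)\oplus{\cal L}_2$; (2) ${\rm Con}_{\mathbb{BI}}(L)=\{eq(\{\{0\},\{1\}\}\cup\bigcup_{i=1}^tL_i/\alpha_i)\ :\ \alpha_i\in{\rm Con}_{\mathbb{BI}}(L_i)\text{ for all }i\in[1,t]\}\cup\{\nabla_L\}\cong\left(\prod_{i=1}^t{\rm Con}_{\mathbb{BI}}(L_i)\right)\oplus{\cal L}_2$.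
   Context: A bi--lattice is a bounded lattice with a unary operation $'$ satisfying $a''=a$ and $a\leq b\Rightarrow b'\leq a'$. ${\rm Con}_{\mathbb{BI}}(A)$ is the lattice of lattice congruences $\theta$ of $A$ with $(a,b)\in\theta\Rightarrow(a',b')\in\theta$; ${\rm Con}_{\mathbb{BI}01}(A)$ is the set of those $\theta\in{\rm Con}_{\mathbb{BI}}(A)$ with $0/\theta=\{0\}$ and $1/\theta=\{1\}$. $\Delta_A$, $\nabla_A$ are the identity and total relations; for a partition $\pi$ of a set, $eq(\pi)$ is the corresponding equivalence. ${\cal L}_2$ is the two--element chain. Ordinal sum $A\oplus B$ (lattice $A$ with top, $B$ with bottom): $B$ placed above $A$ with the top of $A$ identified with the bottom of $B$; for a bi--lattice $M$, ${\cal L}_2\oplus M\oplus{\cal L}_2$ is the bi--lattice obtained by adding a new bottom $0$ and new top $1$ to $M$, with $0'=1$, $1'=0$ and the involution of $M$ on $M$. Horizontal sum $A\boxplus B$ of non--trivial bounded lattices: the disjoint union of $A$ and $B$ with their bottoms identified (as $0$) and their tops identified (as $1$), ordered by the union of the two orders; for bi--lattices its involution is that of $A$ on $A$ and that of $B$ on $B$; this operation is associative and commutative. For equivalences $\delta\neq\nabla_A$ on $A$ and $\varepsilon\neq\nabla_B$ on $B$, $\delta\boxplus\varepsilon$ is the equivalence on $A\boxplus B$ whose classes are the classes of $\delta$ other than $0/\delta,1/\delta$, the classes of $\varepsilon$ other than $0/\varepsilon,1/\varepsilon$, and $0/\delta\cup0/\varepsilon$, $1/\delta\cup1/\varepsilon$;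 this operation is extended associatively to $\boxplus_{i=1}^t\alpha_i$. Products of lattices are direct products; $\cong$ is lattice isomorphism. *)

theory Defs
  imports Main "HOL-Library.FuncSet"
begin

record 'a bilat =
  car :: "'a set"
  le  :: "'a \<Rightarrow> 'a \<Rightarrow> bool"
  inv :: "'a \<Rightarrow> 'a"

definition is_lub :: "'a bilat \<Rightarrow> 'a \<Rightarrow> 'a \<Rightarrow> 'a \<Rightarrow> bool" where
  "is_lub B x y z \<longleftrightarrow> z \<in> car B \<and> le B x z \<and> le B y z \<and>
     (\<forall>w\<in>car B. le B x w \<and> le B y w \<longrightarrow> le B z w)"

definition is_glb :: "'a bilat \<Rightarrow> 'a \<Rightarrow> 'a \<Rightarrow> 'a \<Rightarrow> bool" where
  "is_glb B x y z \<longleftrightarrow> z \<in> car B \<and> le B z x \<and> le B z y \<and>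
     (\<forall>w\<in>car B. le B w x \<and> le B w y \<longrightarrow> le B w z)"

definition join :: "'a bilat \<Rightarrow> 'a \<Rightarrow> 'a \<Rightarrow> 'a" where
  "join B x y = (THE z. is_lub B x y z)"

definition meet :: "'a bilat \<Rightarrow> 'a \<Rightarrow> 'a \<Rightarrow> 'a" where
  "meet B x y = (THE z. is_glb B x y z)"

definition bot :: "'a bilat \<Rightarrow> 'a" where
  "bot B = (THE z. z \<in> car B \<and> (\<forall>x\<in>car B. le B z x))"

definition top :: "'a bilat \<Rightarrow> 'a" where
  "top B = (THE z. z \<in> car B \<and> (\<forall>x\<in>car B. le B x z))"

definition bounded_lattice_on :: "'a bilat \<Rightarrow> bool" where
  "bounded_lattice_on B \<longleftrightarrow>
     (\<forall>x\<in>car B. le B x x) \<and>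
     (\<forall>x\<in>car B. \<forall>y\<in>car B. le B x y \<and> le B y x \<longrightarrow> x = y) \<and>
     (\<forall>x\<in>car B. \<forall>y\<in>car B. \<forall>z\<in>car B. le B x y \<and> le B y z \<longrightarrow> le B x z) \<and>
     (\<forall>x\<in>car B. \<forall>y\<in>car B. (\<exists>z. is_lub B x y z) \<and> (\<exists>z. is_glb B x y z)) \<and>
     (\<exists>z\<in>car B. \<forall>x\<in>car B. le B z x) \<and>
     (\<exists>z\<in>car B. \<forall>x\<in>car B. le B x z)"

definition bi_lattice :: "'a bilat \<Rightarrow> bool" where
  "bi_lattice B \<longleftrightarrow> bounded_lattice_on B \<and>
     (\<forall>a\<in>car B. inv B a \<in> car B) \<and>
     (\<forall>a\<in>car B. inv B (inv B a) = a) \<and>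
     (\<forall>a\<in>car B. \<forall>b\<in>car B. le B a b \<longrightarrow> le B (inv B b) (inv B a))"

definition lat_cong :: "'a bilat \<Rightarrow> ('a \<times> 'a) set \<Rightarrow> bool" where
  "lat_cong B \<theta> \<longleftrightarrow> equiv (car B) \<theta> \<and>
     (\<forall>a b c d. (a, b) \<in> \<theta> \<and> (c, d) \<in> \<theta> \<longrightarrow>
        (join B a c, join B b d) \<in> \<theta> \<and> (meet B a c, meet B b d) \<in> \<theta>)"

definition Con_BI :: "'a bilat \<Rightarrow> ('a \<times> 'a) set set" where
  "Con_BI B = {\<theta>. lat_cong B \<theta> \<and> (\<forall>a b. (a, b) \<in> \<theta> \<longrightarrow> (inv B a, inv B b) \<in> \<theta>)}"

definition Con_BI01 :: "'a bilat \<Rightarrow> ('a \<times> 'a) set set" where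
  "Con_BI01 B = {\<theta> \<in> Con_BI B. \<theta> `` {bot B} = {bot B} \<and> \<theta> `` {top B} = {top B}}"

definition nabla :: "'a bilat \<Rightarrow> ('a \<times> 'a) set" where
  "nabla B = car B \<times> car B"

definition eq_of :: "'a set set \<Rightarrow> ('a \<times> 'a) set" where
  "eq_of \<pi> = {(x, y). \<exists>C\<in>\<pi>. x \<in> C \<and> y \<in> C}"

datatype 'a hs = HBot | HTop | HEl nat 'a

definition hsum :: "nat \<Rightarrow> (nat \<Rightarrow> 'a bilat) \<Rightarrow> 'a hs bilat" where
  "hsum t Ks = \<lparr> car = {HBot, HTop} \<union>
        {HEl i x | i x. i \<in> {1..t} \<and> x \<in> car (Ks i) \<and> x \<noteq> bot (Ks i) \<and> x \<noteq> top (Ks i)},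
      le = (\<lambda>u v. u = HBot \<or> v = HTop \<or>
              (\<exists>i x y. u = HEl i x \<and> v = HEl i y \<and> le (Ks i) x y)),
      inv = (\<lambda>u. case u of HBot \<Rightarrow> HTop | HTop \<Rightarrow> HBot | HEl i x \<Rightarrow> HEl i (inv (Ks i) x)) \<rparr>"

definition hsum_cong :: "nat \<Rightarrow> (nat \<Rightarrow> 'a bilat) \<Rightarrow> (nat \<Rightarrow> ('a \<times> 'a) set) \<Rightarrow> ('a hs \<times> 'a hs) set" where
  "hsum_cong t Ks \<alpha>s = eq_of (
      {{HBot} \<union> (\<Union>i\<in>{1..t}. HEl i ` (\<alpha>s i `` {bot (Ks i)} - {bot (Ks i)})),
       {HTop} \<union> (\<Union>i\<in>{1..t}. HEl i ` (\<alpha>s i `` {top (Ks i)} - {top (Ks i)}))}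
      \<union> (\<Union>i\<in>{1..t}. (\<lambda>C. HEl i ` C) `
            ((car (Ks i) // \<alpha>s i) - {\<alpha>s i `` {bot (Ks i)}, \<alpha>s i `` {top (Ks i)}})))"

section \<open>L_2 + M + L_2 (new bottom and top)\<close>

datatype 'a ext = EBot | ETop | EIn 'a

definition ext_bl :: "'a bilat \<Rightarrow> 'a ext bilat" where
  "ext_bl M = \<lparr> car = {EBot, ETop} \<union> EIn ` car M,
      le = (\<lambda>u v. u = EBot \<or> v = ETop \<or> (\<exists>x y. u = EIn x \<and> v = EIn y \<and> le M x y)),
      inv = (\<lambda>u. case u of EBot \<Rightarrow> ETop | ETop \<Rightarrow> EBot | EIn x \<Rightarrow> EIn (inv M x)) \<rparr>"

definition order_iso :: "'a set \<Rightarrow> ('a \<Rightarrow> 'a \<Rightarrow> bool) \<Rightarrow> 'b set \<Rightarrow> ('b \<Rightarrow> 'b \<Rightarrow> bool) \<Rightarrow> bool" where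
  "order_iso A leA B leB \<longleftrightarrow> (\<exists>h. bij_betw h A B \<and>
     (\<forall>x\<in>A. \<forall>y\<in>A. leA x y \<longleftrightarrow> leB (h x) (h y)))"

text \<open>(prod_{i=1}^t C_i) + L_2: the product (componentwise inclusion) with a new top None.\<close>
definition prod_plus_carrier :: "nat \<Rightarrow> (nat \<Rightarrow> 'r set set) \<Rightarrow> (nat \<Rightarrow> 'r set) option set" where
  "prod_plus_carrier t Cs = Some ` (PiE {1..t} Cs) \<union> {None}"

definition prod_plus_le :: "nat \<Rightarrow> (nat \<Rightarrow> 'r set) option \<Rightarrow> (nat \<Rightarrow> 'r set) option \<Rightarrow> bool" where
  "prod_plus_le t a b \<longleftrightarrow> b = None \<or>
     (\<exists>f g. a = Some f \<and> b = Some g \<and> (\<forall>i\<in>{1..t}. f i \<subseteq> g i))"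

end

theory Submission
  imports Defs
begin


lemma join_eq_gen:
  assumes "is_lub B x y z" "\<forall>a\<in>car B. \<forall>b\<in>car B. le B a b \<and> le B b a \<longrightarrow> a = b"
  shows "join B x y = z"
  unfolding join_def
  apply (rule the_equality, rule assms(1))
  using assms unfolding is_lub_def by blast

lemma meet_eq_gen:
  assumes "is_glb B x y z" "\<forall>a\<in>car B. \<forall>b\<in>car B. le B a b \<and> le B b a \<longrightarrow> a = b"
  shows "meet B x y = z"
  unfolding meet_def
  apply (rule the_equality, rule assms(1))
  using assms unfolding is_glb_def by blast

locale bil =
  fixes B :: "'a bilat"
  assumes bl: "bi_lattice B"
begin

lemma bl1: "bounded_lattice_on B" and inv_car: "x \<in> car B \<Longrightarrow> inv B x \<in> car B"
  and inv_inv: "x \<in> car B \<Longrightarrow> inv B (inv B x) = x"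
  and inv_anti: "x \<in> car B \<Longrightarrow> y \<in> car B \<Longrightarrow> le B x y \<Longrightarrow> le B (inv B y) (inv B x)"
  using bl unfolding bi_lattice_def by blast+

lemma refl_le: "x \<in> car B \<Longrightarrow> le B x x"
  and antisym: "x \<in> car B \<Longrightarrow> y \<in> car B \<Longrightarrow> le B x y \<Longrightarrow> le B y x \<Longrightarrow> x = y"
  and trans_le: "x \<in> car B \<Longrightarrow> y \<in> car B \<Longrightarrow> z \<in> car B \<Longrightarrow> le B x y \<Longrightarrow> le B y z \<Longrightarrow> le B x z"
  and lub_ex: "x \<in> car B \<Longrightarrow> y \<in> car B \<Longrightarrow> \<exists>z. is_lub B x y z"
  and glb_ex: "x \<in> car B \<Longrightarrow> y \<in> car B \<Longrightarrow> \<exists>z. is_glb B x y z"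
  and bot_ex: "\<exists>z\<in>car B. \<forall>x\<in>car B. le B z x"
  and top_ex: "\<exists>z\<in>car B. \<forall>x\<in>car B. le B x z"
  using bl1 unfolding bounded_lattice_on_def by (elim conjE; blast)+

lemma antisym': "\<forall>a\<in>car B. \<forall>b\<in>car B. le B a b \<and> le B b a \<longrightarrow> a = b"
  using antisym by blast

lemma join_prop: "x \<in> car B \<Longrightarrow> y \<in> car B \<Longrightarrow> is_lub B x y (join B x y)"
proof -
  assume "x \<in> car B" "y \<in> car B"
  then obtain z where "is_lub B x y z" using lub_ex by blast
  moreover from this have "join B x y = z" by (rule join_eq_gen[OF _ antisym'])
  ultimately show ?thesis by simp
qed

lemma meet_prop: "x \<in> car B \<Longrightarrow> y \<in> car B \<Longrightarrow> is_glb B x y (meet B x y)"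
proof -
  assume "x \<in> car B" "y \<in> car B"
  then obtain z where "is_glb B x y z" using glb_ex by blast
  moreover from this have "meet B x y = z" by (rule meet_eq_gen[OF _ antisym'])
  ultimately show ?thesis by simp
qed

lemma join_eq: "is_lub B x y z \<Longrightarrow> join B x y = z"
  using join_eq_gen[OF _ antisym'] .
lemma meet_eq: "is_glb B x y z \<Longrightarrow> meet B x y = z"
  using meet_eq_gen[OF _ antisym'] .

lemma join_car: "x \<in> car B \<Longrightarrow> y \<in> car B \<Longrightarrow> join B x y \<in> car B"
  using join_prop[of x y] by (simp add: is_lub_def)
lemma meet_car: "x \<in> car B \<Longrightarrow> y \<in> car B \<Longrightarrow> meet B x y \<in> car B"
  using meet_prop[of x y] by (simp add: is_glb_def)

lemma bot_prop: "bot B \<in> car B \<and> (\<forall>x\<in>car B. le B (bot B) x)"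
proof -
  obtain z where z: "z \<in> car B" "\<forall>x\<in>car B. le B z x" using bot_ex by blast
  have "bot B = z" unfolding bot_def
    apply (rule the_equality) using z antisym by auto
  then show ?thesis using z by simp
qed

lemma top_prop: "top B \<in> car B \<and> (\<forall>x\<in>car B. le B x (top B))"
proof -
  obtain z where z: "z \<in> car B" "\<forall>x\<in>car B. le B x z" using top_ex by blast
  have "top B = z" unfolding top_def
    apply (rule the_equality) using z antisym by auto
  then show ?thesis using z by simp
qed

lemma bot_car: "bot B \<in> car B" and top_car: "top B \<in> car B"
  and bot_le: "x \<in> car B \<Longrightarrow> le B (bot B) x" and le_top: "x \<in> car B \<Longrightarrow> le B x (top B)"
  using bot_prop top_prop by auto

lemma le_bot_iff: "x \<in> car B \<Longrightarrow> le B x (bot B) \<longleftrightarrow> x = bot B"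
  using antisym bot_car bot_le refl_le by blast
lemma top_le_iff: "x \<in> car B \<Longrightarrow> le B (top B) x \<longleftrightarrow> x = top B"
  using antisym top_car le_top refl_le by blast

lemma inv_bot: "inv B (bot B) = top B"
proof -
  have "\<forall>y\<in>car B. le B y (inv B (bot B))"
  proof
    fix y assume y: "y \<in> car B"
    have "le B (inv B (inv B y)) (inv B (bot B))"
      using inv_anti[OF bot_car inv_car[OF y] bot_le[OF inv_car[OF y]]] .
    then show "le B y (inv B (bot B))" using inv_inv y by simp
  qed
  then show ?thesis using top_le_iff inv_car bot_car top_car by blast
qed

lemma inv_top: "inv B (top B) = bot B"
  using inv_bot inv_inv bot_car by metis

lemma inv_eq_bot: "x \<in> car B \<Longrightarrow> inv B x = bot B \<longleftrightarrow> x = top B"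
  using inv_top inv_inv inv_bot by metis
lemma inv_eq_top: "x \<in> car B \<Longrightarrow> inv B x = top B \<longleftrightarrow> x = bot B"
  using inv_top inv_inv inv_bot by metis

lemma join_bot_iff: "x \<in> car B \<Longrightarrow> y \<in> car B \<Longrightarrow> join B x y = bot B \<longleftrightarrow> x = bot B \<and> y = bot B"
proof -
  assume xy: "x \<in> car B" "y \<in> car B"
  show ?thesis
  proof
    assume "join B x y = bot B"
    then show "x = bot B \<and> y = bot B" using join_prop[OF xy] le_bot_iff xy unfolding is_lub_def by metis
  next
    assume "x = bot B \<and> y = bot B"
    then show "join B x y = bot B" using join_prop[OF xy] le_bot_iff bot_car refl_le unfolding is_lub_def by metis
  qed
qed

lemma meet_top_iff: "x \<in> car B \<Longrightarrow> y \<in> car B \<Longrightarrow> meet B x y = top B \<longleftrightarrow> x = top B \<and> y = top B"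
proof -
  assume xy: "x \<in> car B" "y \<in> car B"
  show ?thesis
  proof
    assume "meet B x y = top B"
    then show "x = top B \<and> y = top B" using meet_prop[OF xy] top_le_iff xy unfolding is_glb_def by metis
  next
    assume "x = top B \<and> y = top B"
    then show "meet B x y = top B" using meet_prop[OF xy] top_le_iff top_car refl_le unfolding is_glb_def by metis
  qed
qed

lemma join_bot_left: "y \<in> car B \<Longrightarrow> join B (bot B) y = y"
  by (rule join_eq) (auto simp: is_lub_def bot_le refl_le bot_car)
lemma join_bot_right: "y \<in> car B \<Longrightarrow> join B y (bot B) = y"
  by (rule join_eq) (auto simp: is_lub_def bot_le refl_le bot_car)
lemma meet_top_left: "y \<in> car B \<Longrightarrow> meet B (top B) y = y"
  by (rule meet_eq) (auto simp: is_glb_def le_top refl_le top_car)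
lemma meet_top_right: "y \<in> car B \<Longrightarrow> meet B y (top B) = y"
  by (rule meet_eq) (auto simp: is_glb_def le_top refl_le top_car)

end


lemma hsum_simps:
  "car (hsum t Ms) = {HBot, HTop} \<union>
        {HEl i x | i x. i \<in> {1..t} \<and> x \<in> car (Ms i) \<and> x \<noteq> bot (Ms i) \<and> x \<noteq> top (Ms i)}"
  "le (hsum t Ms) u v = (u = HBot \<or> v = HTop \<or>
              (\<exists>i x y. u = HEl i x \<and> v = HEl i y \<and> le (Ms i) x y))"
  "inv (hsum t Ms) u = (case u of HBot \<Rightarrow> HTop | HTop \<Rightarrow> HBot | HEl i x \<Rightarrow> HEl i (inv (Ms i) x))"
  by (simp_all add: hsum_def)

definition lift :: "(nat \<Rightarrow> 'a bilat) \<Rightarrow> nat \<Rightarrow> 'a \<Rightarrow> 'a hs" where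
  "lift Ms i x = (if x = bot (Ms i) then HBot else if x = top (Ms i) then HTop else HEl i x)"

locale hsl =
  fixes t :: nat and Ms :: "nat \<Rightarrow> 'a bilat"
  assumes t2: "t \<ge> 2" and bls: "\<forall>i\<in>{1..t}. bi_lattice (Ms i)"
   and nt: "\<forall>i\<in>{1..t}. \<exists>x\<in>car (Ms i). x \<noteq> bot (Ms i) \<and> x \<noteq> top (Ms i)"
begin

abbreviation "K \<equiv> hsum t Ms"

lemma bil_i: "i \<in> {1..t} \<Longrightarrow> bil (Ms i)"
  using bls by (simp add: bil_def)

lemma bot_ne_top: "i \<in> {1..t} \<Longrightarrow> bot (Ms i) \<noteq> top (Ms i)"
proof
  assume i: "i \<in> {1..t}" and e: "bot (Ms i) = top (Ms i)"
  interpret M: bil "Ms i" using bil_i[OF i] .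
  obtain x where x: "x \<in> car (Ms i)" "x \<noteq> bot (Ms i)" "x \<noteq> top (Ms i)" using nt i by blast
  have "le (Ms i) x (bot (Ms i))" using e M.le_top x by simp
  then show False using M.le_bot_iff x by simp
qed

lemma one_in: "1 \<in> {1..t}" using t2 by simp

lemma lift_car: "i \<in> {1..t} \<Longrightarrow> x \<in> car (Ms i) \<Longrightarrow> lift Ms i x \<in> car K"
  by (auto simp: lift_def hsum_simps)

lemma car_lift: "u \<in> car K \<Longrightarrow> \<exists>i\<in>{1..t}. \<exists>x\<in>car (Ms i). u = lift Ms i x"
proof -
  assume u: "u \<in> car K"
  interpret M: bil "Ms 1" using bil_i[OF one_in] .
  show ?thesis
  proof (cases u)
    case HBot then show ?thesis using one_in M.bot_car
      by (intro bexI[of _ 1] bexI[of _ "bot (Ms 1)"]) (auto simp: lift_def)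
  next
    case HTop then show ?thesis using one_in M.top_car bot_ne_top[OF one_in]
      by (intro bexI[of _ 1] bexI[of _ "top (Ms 1)"]) (auto simp: lift_def)
  next
    case (HEl i x) then show ?thesis using u by (auto simp: lift_def hsum_simps)
  qed
qed

lemma lift_eq:
  assumes "i \<in> {1..t}" "j \<in> {1..t}" "x \<in> car (Ms i)" "y \<in> car (Ms j)"
  shows "lift Ms i x = lift Ms j y \<longleftrightarrow>
     (x = bot (Ms i) \<and> y = bot (Ms j)) \<or> (x = top (Ms i) \<and> y = top (Ms j)) \<or> (i = j \<and> x = y)"
  using bot_ne_top[OF assms(1)] bot_ne_top[OF assms(2)]
  by (auto simp: lift_def)

lemma le_lift:
  assumes i: "i \<in> {1..t}" and j: "j \<in> {1..t}" and x: "x \<in> car (Ms i)" and y: "y \<in> car (Ms j)"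
  shows "le K (lift Ms i x) (lift Ms j y) \<longleftrightarrow>
     (if i = j then le (Ms i) x y else x = bot (Ms i) \<or> y = top (Ms j))"
proof -
  interpret I: bil "Ms i" using bil_i[OF i] .
  interpret J: bil "Ms j" using bil_i[OF j] .
  show ?thesis
    using bot_ne_top[OF i] bot_ne_top[OF j] I.bot_le[OF x] I.le_top[OF x] J.bot_le[OF y] J.le_top[OF y]
      I.le_bot_iff[OF x] I.top_le_iff[OF x] J.le_bot_iff[OF y] J.top_le_iff[OF y]
    by (auto simp: lift_def hsum_simps)
qed

lemma antisymK: "\<forall>a\<in>car K. \<forall>b\<in>car K. le K a b \<and> le K b a \<longrightarrow> a = b"
proof (intro ballI impI)
  fix a b assume a: "a \<in> car K" and b: "b \<in> car K" and h: "le K a b \<and> le K b a"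
  obtain i x where ix: "i \<in> {1..t}" "x \<in> car (Ms i)" "a = lift Ms i x" using car_lift[OF a] by blast
  obtain j y where jy: "j \<in> {1..t}" "y \<in> car (Ms j)" "b = lift Ms j y" using car_lift[OF b] by blast
  interpret I: bil "Ms i" using bil_i[OF ix(1)] .
  have h2: "(if i = j then le (Ms i) x y else x = bot (Ms i) \<or> y = top (Ms j)) \<and>
            (if j = i then le (Ms j) y x else y = bot (Ms j) \<or> x = top (Ms i))"
    using h ix jy le_lift by simp
  show "a = b"
  proof (cases "i = j")
    case True
    then show ?thesis using h2 I.antisym ix jy by auto
  next
    case False
    then show ?thesis using h2 ix jy lift_eq[OF ix(1) jy(1) ix(2) jy(2)] bot_ne_top[OF ix(1)] bot_ne_top[OF jy(1)]
      by auto
  qed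
qed

end


context hsl begin

lemma join_lift_same:
  assumes i: "i \<in> {1..t}" and x: "x \<in> car (Ms i)" and y: "y \<in> car (Ms i)"
  shows "join K (lift Ms i x) (lift Ms i y) = lift Ms i (join (Ms i) x y)"
proof -
  interpret M: bil "Ms i" using bil_i[OF i] .
  have jc: "join (Ms i) x y \<in> car (Ms i)" using M.join_car x y .
  have lub: "is_lub (Ms i) x y (join (Ms i) x y)" using M.join_prop x y .
  have "is_lub K (lift Ms i x) (lift Ms i y) (lift Ms i (join (Ms i) x y))"
    unfolding is_lub_def
  proof (intro conjI ballI impI)
    show "lift Ms i (join (Ms i) x y) \<in> car K" by (rule lift_car[OF i jc])
    show "le K (lift Ms i x) (lift Ms i (join (Ms i) x y))"
      using le_lift[OF i i x jc] lub by (simp add: is_lub_def)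
    show "le K (lift Ms i y) (lift Ms i (join (Ms i) x y))"
      using le_lift[OF i i y jc] lub by (simp add: is_lub_def)
    fix w assume w: "w \<in> car K" and h: "le K (lift Ms i x) w \<and> le K (lift Ms i y) w"
    obtain k w' where k: "k \<in> {1..t}" "w' \<in> car (Ms k)" "w = lift Ms k w'"
      using car_lift[OF w] by blast
    show "le K (lift Ms i (join (Ms i) x y)) w"
    proof (cases "k = i")
      case True
      then have "le (Ms i) x w' \<and> le (Ms i) y w'"
        using h k le_lift[OF i k(1) x k(2)] le_lift[OF i k(1) y k(2)] by simp
      then have "le (Ms i) (join (Ms i) x y) w'" using lub k True by (simp add: is_lub_def)
      then show ?thesis using le_lift[OF i k(1) jc k(2)] True k by simp
    next
      case False
      then have "(x = bot (Ms i) \<or> w' = top (Ms k)) \<and> (y = bot (Ms i) \<or> w' = top (Ms k))"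
        using h k le_lift[OF i k(1) x k(2)] le_lift[OF i k(1) y k(2)] by simp
      then have "join (Ms i) x y = bot (Ms i) \<or> w' = top (Ms k)" using M.join_bot_iff x y by auto
      then show ?thesis using le_lift[OF i k(1) jc k(2)] False k by simp
    qed
  qed
  then show ?thesis by (rule join_eq_gen[OF _ antisymK])
qed

lemma meet_lift_same:
  assumes i: "i \<in> {1..t}" and x: "x \<in> car (Ms i)" and y: "y \<in> car (Ms i)"
  shows "meet K (lift Ms i x) (lift Ms i y) = lift Ms i (meet (Ms i) x y)"
proof -
  interpret M: bil "Ms i" using bil_i[OF i] .
  have jc: "meet (Ms i) x y \<in> car (Ms i)" using M.meet_car x y .
  have lub: "is_glb (Ms i) x y (meet (Ms i) x y)" using M.meet_prop x y .
  have "is_glb K (lift Ms i x) (lift Ms i y) (lift Ms i (meet (Ms i) x y))"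
    unfolding is_glb_def
  proof (intro conjI ballI impI)
    show "lift Ms i (meet (Ms i) x y) \<in> car K" by (rule lift_car[OF i jc])
    show "le K (lift Ms i (meet (Ms i) x y)) (lift Ms i x)"
      using le_lift[OF i i jc x] lub by (simp add: is_glb_def)
    show "le K (lift Ms i (meet (Ms i) x y)) (lift Ms i y)"
      using le_lift[OF i i jc y] lub by (simp add: is_glb_def)
    fix w assume w: "w \<in> car K" and h: "le K w (lift Ms i x) \<and> le K w (lift Ms i y)"
    obtain k w' where k: "k \<in> {1..t}" "w' \<in> car (Ms k)" "w = lift Ms k w'"
      using car_lift[OF w] by blast
    show "le K w (lift Ms i (meet (Ms i) x y))"
    proof (cases "k = i")
      case True
      then have "le (Ms i) w' x \<and> le (Ms i) w' y"
        using h k le_lift[OF k(1) i k(2) x] le_lift[OF k(1) i k(2) y] by simp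
      then have "le (Ms i) w' (meet (Ms i) x y)" using lub k True by (simp add: is_glb_def)
      then show ?thesis using le_lift[OF k(1) i k(2) jc] True k by simp
    next
      case False
      then have "(x = top (Ms i) \<or> w' = bot (Ms k)) \<and> (y = top (Ms i) \<or> w' = bot (Ms k))"
        using h k le_lift[OF k(1) i k(2) x] le_lift[OF k(1) i k(2) y] by auto
      then have "meet (Ms i) x y = top (Ms i) \<or> w' = bot (Ms k)" using M.meet_top_iff x y by auto
      then show ?thesis using le_lift[OF k(1) i k(2) jc] False k by auto
    qed
  qed
  then show ?thesis by (rule meet_eq_gen[OF _ antisymK])
qed

lemma lift_bot: "lift Ms i (bot (Ms i)) = HBot" by (simp add: lift_def)
lemma lift_top: "i \<in> {1..t} \<Longrightarrow> lift Ms i (top (Ms i)) = HTop"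
  using bot_ne_top[of i] by (auto simp: lift_def)

lemma join_lift_diff:
  assumes i: "i \<in> {1..t}" and j: "j \<in> {1..t}" and x: "x \<in> car (Ms i)" and y: "y \<in> car (Ms j)"
    and ij: "i \<noteq> j"
  shows "join K (lift Ms i x) (lift Ms j y) =
     (if x = bot (Ms i) then lift Ms j y else if y = bot (Ms j) then lift Ms i x else HTop)"
proof -
  interpret I: bil "Ms i" using bil_i[OF i] .
  interpret J: bil "Ms j" using bil_i[OF j] .
  show ?thesis
  proof (cases "x = bot (Ms i)")
    case True
    then have "lift Ms i x = lift Ms j (bot (Ms j))" by (simp add: lift_bot)
    then show ?thesis using join_lift_same[OF j J.bot_car y] J.join_bot_left[OF y] True by simp
  next
    case xb: False
    show ?thesis
    proof (cases "y = bot (Ms j)")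
      case True
      then have "lift Ms j y = lift Ms i (bot (Ms i))" by (simp add: lift_bot)
      then show ?thesis using join_lift_same[OF i x I.bot_car] I.join_bot_right[OF x] True xb by simp
    next
      case yb: False
      have "is_lub K (lift Ms i x) (lift Ms j y) HTop"
        unfolding is_lub_def
      proof (intro conjI ballI impI)
        show "HTop \<in> car K" by (simp add: hsum_simps)
        show "le K (lift Ms i x) HTop" by (simp add: hsum_simps)
        show "le K (lift Ms j y) HTop" by (simp add: hsum_simps)
        fix w assume w: "w \<in> car K" and h: "le K (lift Ms i x) w \<and> le K (lift Ms j y) w"
        obtain k w' where k: "k \<in> {1..t}" "w' \<in> car (Ms k)" "w = lift Ms k w'"
          using car_lift[OF w] by blast
        have "w' = top (Ms k)"
        proof (cases "k = i")
          case True
          then show ?thesis using h k le_lift[OF j k(1) y k(2)] ij yb by simp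
        next
          case False
          then show ?thesis using h k le_lift[OF i k(1) x k(2)] xb by simp
        qed
        then show "le K HTop w" using k lift_top by (simp add: hsum_simps)
      qed
      then show ?thesis using xb yb join_eq_gen[OF _ antisymK] by simp
    qed
  qed
qed

lemma meet_lift_diff:
  assumes i: "i \<in> {1..t}" and j: "j \<in> {1..t}" and x: "x \<in> car (Ms i)" and y: "y \<in> car (Ms j)"
    and ij: "i \<noteq> j"
  shows "meet K (lift Ms i x) (lift Ms j y) =
     (if x = top (Ms i) then lift Ms j y else if y = top (Ms j) then lift Ms i x else HBot)"
proof -
  interpret I: bil "Ms i" using bil_i[OF i] .
  interpret J: bil "Ms j" using bil_i[OF j] .
  show ?thesis
  proof (cases "x = top (Ms i)")
    case True
    then have "lift Ms i x = lift Ms j (top (Ms j))" using lift_top[OF i] lift_top[OF j] by simp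
    then show ?thesis using meet_lift_same[OF j J.top_car y] J.meet_top_left[OF y] True by simp
  next
    case xb: False
    show ?thesis
    proof (cases "y = top (Ms j)")
      case True
      then have "lift Ms j y = lift Ms i (top (Ms i))" using lift_top[OF i] lift_top[OF j] by simp
      then show ?thesis using meet_lift_same[OF i x I.top_car] I.meet_top_right[OF x] True xb by simp
    next
      case yb: False
      have "is_glb K (lift Ms i x) (lift Ms j y) HBot"
        unfolding is_glb_def
      proof (intro conjI ballI impI)
        show "HBot \<in> car K" by (simp add: hsum_simps)
        show "le K HBot (lift Ms i x)" by (simp add: hsum_simps)
        show "le K HBot (lift Ms j y)" by (simp add: hsum_simps)
        fix w assume w: "w \<in> car K" and h: "le K w (lift Ms i x) \<and> le K w (lift Ms j y)"
        obtain k w' where k: "k \<in> {1..t}" "w' \<in> car (Ms k)" "w = lift Ms k w'"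
          using car_lift[OF w] by blast
        have "w' = bot (Ms k)"
        proof (cases "k = i")
          case True
          then show ?thesis using h k le_lift[OF k(1) j k(2) y] ij yb by auto
        next
          case False
          then show ?thesis using h k le_lift[OF k(1) i k(2) x] xb by auto
        qed
        then show "le K w HBot" using k lift_bot by (simp add: hsum_simps)
      qed
      then show ?thesis using xb yb meet_eq_gen[OF _ antisymK] by simp
    qed
  qed
qed

lemma inv_lift:
  assumes i: "i \<in> {1..t}" and x: "x \<in> car (Ms i)"
  shows "inv K (lift Ms i x) = lift Ms i (inv (Ms i) x)"
proof -
  interpret I: bil "Ms i" using bil_i[OF i] .
  show ?thesis using I.inv_bot I.inv_top I.inv_eq_bot[OF x] I.inv_eq_top[OF x] bot_ne_top[OF i]
    by (auto simp: lift_def hsum_simps)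
qed

end


lemma equiv_iff: "equiv A r \<longleftrightarrow> r \<subseteq> A \<times> A \<and> (\<forall>x\<in>A. (x,x)\<in>r) \<and> (\<forall>x y. (x,y)\<in>r \<longrightarrow> (y,x)\<in>r)
   \<and> (\<forall>x y z. (x,y)\<in>r \<longrightarrow> (y,z)\<in>r \<longrightarrow> (x,z)\<in>r)"
  unfolding equiv_def refl_on_def sym_def trans_def by blast

lemma ConBI_iff: "\<theta> \<in> Con_BI B \<longleftrightarrow> equiv (car B) \<theta> \<and>
     (\<forall>a b c d. (a, b) \<in> \<theta> \<and> (c, d) \<in> \<theta> \<longrightarrow>
        (join B a c, join B b d) \<in> \<theta> \<and> (meet B a c, meet B b d) \<in> \<theta>) \<and>
     (\<forall>a b. (a, b) \<in> \<theta> \<longrightarrow> (inv B a, inv B b) \<in> \<theta>)"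
  by (simp add: Con_BI_def lat_cong_def)

definition Rc :: "(nat \<Rightarrow> 'a bilat) \<Rightarrow> nat \<Rightarrow> ('a hs \<times> 'a hs) set \<Rightarrow> ('a \<times> 'a) set" where
  "Rc Ms i \<theta> = {(x,y). x \<in> car (Ms i) \<and> y \<in> car (Ms i) \<and> (lift Ms i x, lift Ms i y) \<in> \<theta>}"

definition Th :: "nat \<Rightarrow> (nat \<Rightarrow> 'a bilat) \<Rightarrow> (nat \<Rightarrow> ('a \<times> 'a) set) \<Rightarrow> ('a hs \<times> 'a hs) set" where
  "Th t Ms \<alpha> = {(lift Ms i x, lift Ms i y) | i x y. i \<in> {1..t} \<and> (x,y) \<in> \<alpha> i}"

context bil begin
lemma meet_bot_right: "x \<in> car B \<Longrightarrow> meet B x (bot B) = bot B"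
  by (rule meet_eq) (auto simp: is_glb_def bot_le refl_le bot_car)
lemma join_top_right: "x \<in> car B \<Longrightarrow> join B x (top B) = top B"
  by (rule join_eq) (auto simp: is_lub_def le_top refl_le top_car)
end

context hsl begin

lemma lift_inj: "i \<in> {1..t} \<Longrightarrow> x \<in> car (Ms i) \<Longrightarrow> y \<in> car (Ms i) \<Longrightarrow> lift Ms i x = lift Ms i y \<longleftrightarrow> x = y"
  using lift_eq[of i i x y] by auto

lemma lift_HBot: "i \<in> {1..t} \<Longrightarrow> x \<in> car (Ms i) \<Longrightarrow> lift Ms i x = HBot \<longleftrightarrow> x = bot (Ms i)"
  using bot_ne_top[of i] by (auto simp: lift_def)
lemma lift_HTop: "i \<in> {1..t} \<Longrightarrow> x \<in> car (Ms i) \<Longrightarrow> lift Ms i x = HTop \<longleftrightarrow> x = top (Ms i)"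
  using bot_ne_top[of i] by (auto simp: lift_def)

lemma HBot_car: "HBot \<in> car K" and HTop_car: "HTop \<in> car K" by (auto simp: hsum_simps)

lemma join_K_car: "u \<in> car K \<Longrightarrow> v \<in> car K \<Longrightarrow> join K u v \<in> car K"
proof -
  assume u: "u \<in> car K" and v: "v \<in> car K"
  obtain i x where ix: "i \<in> {1..t}" "x \<in> car (Ms i)" "u = lift Ms i x" using car_lift[OF u] by blast
  obtain j y where jy: "j \<in> {1..t}" "y \<in> car (Ms j)" "v = lift Ms j y" using car_lift[OF v] by blast
  interpret I: bil "Ms i" using bil_i[OF ix(1)] .
  show ?thesis
  proof (cases "i = j")
    case True then show ?thesis using join_lift_same[OF ix(1) ix(2)] jy ix I.join_car lift_car by auto
  next
    case False then show ?thesis using join_lift_diff[OF ix(1) jy(1) ix(2) jy(2)] jy ix lift_car HTop_car by auto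
  qed
qed

lemma meet_K_car: "u \<in> car K \<Longrightarrow> v \<in> car K \<Longrightarrow> meet K u v \<in> car K"
proof -
  assume u: "u \<in> car K" and v: "v \<in> car K"
  obtain i x where ix: "i \<in> {1..t}" "x \<in> car (Ms i)" "u = lift Ms i x" using car_lift[OF u] by blast
  obtain j y where jy: "j \<in> {1..t}" "y \<in> car (Ms j)" "v = lift Ms j y" using car_lift[OF v] by blast
  interpret I: bil "Ms i" using bil_i[OF ix(1)] .
  show ?thesis
  proof (cases "i = j")
    case True then show ?thesis using meet_lift_same[OF ix(1) ix(2)] jy ix I.meet_car lift_car by auto
  next
    case False then show ?thesis using meet_lift_diff[OF ix(1) jy(1) ix(2) jy(2)] jy ix lift_car HBot_car by auto
  qed
qed

lemma inv_K_car: "u \<in> car K \<Longrightarrow> inv K u \<in> car K"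
proof -
  assume u: "u \<in> car K"
  obtain i x where ix: "i \<in> {1..t}" "x \<in> car (Ms i)" "u = lift Ms i x" using car_lift[OF u] by blast
  interpret I: bil "Ms i" using bil_i[OF ix(1)] .
  show ?thesis using inv_lift[OF ix(1) ix(2)] ix lift_car I.inv_car by auto
qed

lemma meet_K_top: "w \<in> car K \<Longrightarrow> meet K w HTop = w"
proof -
  assume w: "w \<in> car K"
  obtain i x where ix: "i \<in> {1..t}" "x \<in> car (Ms i)" "w = lift Ms i x" using car_lift[OF w] by blast
  interpret I: bil "Ms i" using bil_i[OF ix(1)] .
  show ?thesis using meet_lift_same[OF ix(1) ix(2) I.top_car] lift_top[OF ix(1)] I.meet_top_right[OF ix(2)] ix by simp
qed

lemma meet_K_bot: "w \<in> car K \<Longrightarrow> meet K w HBot = HBot"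
proof -
  assume w: "w \<in> car K"
  obtain i x where ix: "i \<in> {1..t}" "x \<in> car (Ms i)" "w = lift Ms i x" using car_lift[OF w] by blast
  interpret I: bil "Ms i" using bil_i[OF ix(1)] .
  show ?thesis using meet_lift_same[OF ix(1) ix(2) I.bot_car] lift_bot[of i] I.meet_bot_right[OF ix(2)] ix by simp
qed

lemma nabla_K: "nabla K \<in> Con_BI K"
  unfolding ConBI_iff nabla_def equiv_iff
  using join_K_car meet_K_car inv_K_car by auto

lemma other_j: "i \<in> {1..t} \<Longrightarrow> \<exists>j\<in>{1..t}. j \<noteq> i"
  using t2 by (cases "i = 1") (auto intro: bexI[of _ 1] bexI[of _ 2])

lemma bot_class:
  assumes th: "\<theta> \<in> Con_BI K" and ne: "\<theta> \<noteq> nabla K" and hu: "(HBot, u) \<in> \<theta>"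
  shows "u = HBot"
proof (rule ccontr)
  assume uB: "u \<noteq> HBot"
  have eq: "equiv (car K) \<theta>"
    and cj: "\<And>a b c d. (a, b) \<in> \<theta> \<Longrightarrow> (c, d) \<in> \<theta> \<Longrightarrow> (join K a c, join K b d) \<in> \<theta>"
    and cm: "\<And>a b c d. (a, b) \<in> \<theta> \<Longrightarrow> (c, d) \<in> \<theta> \<Longrightarrow> (meet K a c, meet K b d) \<in> \<theta>"
    and ci: "\<And>a b. (a, b) \<in> \<theta> \<Longrightarrow> (inv K a, inv K b) \<in> \<theta>"
    using th unfolding ConBI_iff by blast+
  have sub: "\<theta> \<subseteq> car K \<times> car K" and rf: "\<And>x. x \<in> car K \<Longrightarrow> (x,x) \<in> \<theta>"
    and sy: "\<And>x y. (x,y) \<in> \<theta> \<Longrightarrow> (y,x) \<in> \<theta>"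
    and tr: "\<And>x y z. (x,y) \<in> \<theta> \<Longrightarrow> (y,z) \<in> \<theta> \<Longrightarrow> (x,z) \<in> \<theta>"
    using eq unfolding equiv_iff by blast+
  have BT: "(HBot, HTop) \<in> \<theta>"
  proof -
    have u: "u \<in> car K" using hu sub by blast
    obtain i x where ix: "i \<in> {1..t}" "x \<in> car (Ms i)" "u = lift Ms i x" using car_lift[OF u] by blast
    interpret I: bil "Ms i" using bil_i[OF ix(1)] .
    have xb: "x \<noteq> bot (Ms i)" using uB ix lift_bot by auto
    show ?thesis
    proof (cases "x = top (Ms i)")
      case True then show ?thesis using hu ix lift_top by simp
    next
      case xt: False
      obtain j where j: "j \<in> {1..t}" "j \<noteq> i" using other_j[OF ix(1)] by blast
      interpret J: bil "Ms j" using bil_i[OF j(1)] .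
      obtain y where y: "y \<in> car (Ms j)" "y \<noteq> bot (Ms j)" "y \<noteq> top (Ms j)" using nt j by blast
      have v: "lift Ms j y \<in> car K" using lift_car j y by simp
      have "(join K HBot (lift Ms j y), join K u (lift Ms j y)) \<in> \<theta>" using cj[OF hu rf[OF v]] .
      moreover have "join K HBot (lift Ms j y) = lift Ms j y"
        using join_lift_same[OF j(1) J.bot_car y(1)] lift_bot[of j] J.join_bot_left[OF y(1)] by simp
      moreover have "join K u (lift Ms j y) = HTop"
        using join_lift_diff[OF ix(1) j(1) ix(2) y(1)] j(2) xb y ix by simp
      ultimately have vT: "(lift Ms j y, HTop) \<in> \<theta>" by simp
      have "(inv K HBot, inv K u) \<in> \<theta>" using ci[OF hu] .
      moreover have "inv K HBot = HTop" by (simp add: hsum_simps)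
      moreover have iu: "inv K u = lift Ms i (inv (Ms i) x)" using inv_lift[OF ix(1) ix(2)] ix by simp
      ultimately have Tiu: "(HTop, lift Ms i (inv (Ms i) x)) \<in> \<theta>" by simp
      have ixc: "inv (Ms i) x \<in> car (Ms i)" using I.inv_car ix by simp
      have ixt: "inv (Ms i) x \<noteq> top (Ms i)" using I.inv_eq_top[OF ix(2)] xb by simp
      have "(meet K (lift Ms j y) (lift Ms i (inv (Ms i) x)), meet K HTop (lift Ms i (inv (Ms i) x))) \<in> \<theta>"
        using cm[OF vT rf[OF lift_car[OF ix(1) ixc]]] .
      moreover have "meet K (lift Ms j y) (lift Ms i (inv (Ms i) x)) = HBot"
        using meet_lift_diff[OF j(1) ix(1) y(1) ixc] j(2) y ixt by simp
      moreover have "meet K HTop (lift Ms i (inv (Ms i) x)) = lift Ms i (inv (Ms i) x)"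
        using meet_lift_same[OF ix(1) I.top_car ixc] lift_top[OF ix(1)] I.meet_top_left[OF ixc] by simp
      ultimately have "(HBot, lift Ms i (inv (Ms i) x)) \<in> \<theta>" by simp
      then show ?thesis using tr sy Tiu by blast
    qed
  qed
  have "nabla K \<subseteq> \<theta>"
  proof
    fix p assume "p \<in> nabla K"
    then obtain a b where ab: "p = (a,b)" "a \<in> car K" "b \<in> car K" by (auto simp: nabla_def)
    have "(meet K a HTop, meet K a HBot) \<in> \<theta>" using cm[OF rf[OF ab(2)] sy[OF BT]] .
    then have aB: "(a, HBot) \<in> \<theta>" using meet_K_top[OF ab(2)] meet_K_bot[OF ab(2)] by simp
    have "(meet K b HTop, meet K b HBot) \<in> \<theta>" using cm[OF rf[OF ab(3)] sy[OF BT]] .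
    then have bB: "(b, HBot) \<in> \<theta>" using meet_K_top[OF ab(3)] meet_K_bot[OF ab(3)] by simp
    show "p \<in> \<theta>" using ab aB bB tr sy by blast
  qed
  then show False using ne sub by (auto simp: nabla_def)
qed

end


context bil begin
lemma meet_idem: "x \<in> car B \<Longrightarrow> meet B x x = x"
  by (rule meet_eq) (auto simp: is_glb_def refl_le)
lemma join_idem: "x \<in> car B \<Longrightarrow> join B x x = x"
  by (rule join_eq) (auto simp: is_lub_def refl_le)
end

lemma C01_facts:
  assumes "\<alpha> \<in> Con_BI01 B" "(x,y) \<in> \<alpha>"
  shows "(x = bot B \<longleftrightarrow> y = bot B) \<and> (x = top B \<longleftrightarrow> y = top B)"
proof -
  have e: "equiv (car B) \<alpha>" and b: "\<alpha> `` {bot B} = {bot B}" and t: "\<alpha> `` {top B} = {top B}"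
    using assms(1) unfolding Con_BI01_def ConBI_iff by blast+
  have s: "(y,x) \<in> \<alpha>" using e assms(2) unfolding equiv_iff by blast
  show ?thesis using b t assms(2) s by blast
qed

context hsl begin

lemma cong_facts:
  assumes th: "\<theta> \<in> Con_BI K"
  shows "\<theta> \<subseteq> car K \<times> car K" and "\<And>x. x \<in> car K \<Longrightarrow> (x,x) \<in> \<theta>"
    and "\<And>x y. (x,y) \<in> \<theta> \<Longrightarrow> (y,x) \<in> \<theta>"
    and "\<And>x y z. (x,y) \<in> \<theta> \<Longrightarrow> (y,z) \<in> \<theta> \<Longrightarrow> (x,z) \<in> \<theta>"
    and "\<And>a b c d. (a, b) \<in> \<theta> \<Longrightarrow> (c, d) \<in> \<theta> \<Longrightarrow> (join K a c, join K b d) \<in> \<theta>"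
    and "\<And>a b c d. (a, b) \<in> \<theta> \<Longrightarrow> (c, d) \<in> \<theta> \<Longrightarrow> (meet K a c, meet K b d) \<in> \<theta>"
    and "\<And>a b. (a, b) \<in> \<theta> \<Longrightarrow> (inv K a, inv K b) \<in> \<theta>"
  using th unfolding ConBI_iff equiv_iff by blast+

lemma top_class:
  assumes th: "\<theta> \<in> Con_BI K" and ne: "\<theta> \<noteq> nabla K" and hu: "(HTop, u) \<in> \<theta>"
  shows "u = HTop"
proof -
  have u: "u \<in> car K" using hu cong_facts(1)[OF th] by blast
  obtain i x where ix: "i \<in> {1..t}" "x \<in> car (Ms i)" "u = lift Ms i x" using car_lift[OF u] by blast
  interpret I: bil "Ms i" using bil_i[OF ix(1)] .
  have "(inv K HTop, inv K u) \<in> \<theta>" using cong_facts(7)[OF th hu] .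
  then have "(HBot, lift Ms i (inv (Ms i) x)) \<in> \<theta>" using inv_lift[OF ix(1) ix(2)] ix by (simp add: hsum_simps)
  then have "lift Ms i (inv (Ms i) x) = HBot" using bot_class[OF th ne] by blast
  then have "inv (Ms i) x = bot (Ms i)" using lift_HBot[OF ix(1) I.inv_car[OF ix(2)]] by simp
  then have "x = top (Ms i)" using I.inv_eq_bot[OF ix(2)] by simp
  then show ?thesis using ix lift_top by simp
qed

lemma no_cross:
  assumes th: "\<theta> \<in> Con_BI K" and ne: "\<theta> \<noteq> nabla K"
    and i: "i \<in> {1..t}" and j: "j \<in> {1..t}" and x: "x \<in> car (Ms i)" and y: "y \<in> car (Ms j)"
    and h: "(lift Ms i x, lift Ms j y) \<in> \<theta>" and xb: "x \<noteq> bot (Ms i)" and xt: "x \<noteq> top (Ms i)"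
  shows "i = j"
proof (rule ccontr)
  assume ij: "i \<noteq> j"
  interpret I: bil "Ms i" using bil_i[OF i] .
  have yt: "y \<noteq> top (Ms j)"
  proof
    assume "y = top (Ms j)"
    then have "(HTop, lift Ms i x) \<in> \<theta>" using h lift_top[OF j] cong_facts(3)[OF th] by simp
    then show False using top_class[OF th ne] lift_HTop[OF i x] xt by blast
  qed
  have "(meet K (lift Ms i x) (lift Ms i x), meet K (lift Ms i x) (lift Ms j y)) \<in> \<theta>"
    using cong_facts(6)[OF th cong_facts(2)[OF th lift_car[OF i x]] h] .
  then have "(lift Ms i x, HBot) \<in> \<theta>"
    using meet_lift_same[OF i x x] I.meet_idem[OF x] meet_lift_diff[OF i j x y ij] xt yt by simp
  then have "lift Ms i x = HBot" using bot_class[OF th ne] cong_facts(3)[OF th] by blast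
  then show False using lift_HBot[OF i x] xb by simp
qed

lemma R_cong:
  assumes th: "\<theta> \<in> Con_BI K" and i: "i \<in> {1..t}"
  shows "Rc Ms i \<theta> \<in> Con_BI (Ms i)"
proof -
  interpret I: bil "Ms i" using bil_i[OF i] .
  note cf = cong_facts[OF th]
  show ?thesis
    unfolding ConBI_iff equiv_iff
  proof (intro conjI allI impI ballI)
    show "Rc Ms i \<theta> \<subseteq> car (Ms i) \<times> car (Ms i)" by (auto simp: Rc_def)
    show "(x, x) \<in> Rc Ms i \<theta>" if "x \<in> car (Ms i)" for x
      using that cf(2) lift_car[OF i] by (simp add: Rc_def)
    show "(y, x) \<in> Rc Ms i \<theta>" if "(x, y) \<in> Rc Ms i \<theta>" for x y
      using that cf(3) by (simp add: Rc_def)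
    show "(x, z) \<in> Rc Ms i \<theta>" if "(x, y) \<in> Rc Ms i \<theta>" "(y, z) \<in> Rc Ms i \<theta>" for x y z
      using that cf(4) by (simp add: Rc_def) blast
    fix a b c d assume h: "(a, b) \<in> Rc Ms i \<theta> \<and> (c, d) \<in> Rc Ms i \<theta>"
    then have ab: "a \<in> car (Ms i)" "b \<in> car (Ms i)" "c \<in> car (Ms i)" "d \<in> car (Ms i)"
      and p1: "(lift Ms i a, lift Ms i b) \<in> \<theta>" and p2: "(lift Ms i c, lift Ms i d) \<in> \<theta>"
      by (auto simp: Rc_def)
    show "(join (Ms i) a c, join (Ms i) b d) \<in> Rc Ms i \<theta>"
      using cf(5)[OF p1 p2] join_lift_same[OF i ab(1) ab(3)] join_lift_same[OF i ab(2) ab(4)]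
        I.join_car ab by (simp add: Rc_def)
    show "(meet (Ms i) a c, meet (Ms i) b d) \<in> Rc Ms i \<theta>"
      using cf(6)[OF p1 p2] meet_lift_same[OF i ab(1) ab(3)] meet_lift_same[OF i ab(2) ab(4)]
        I.meet_car ab by (simp add: Rc_def)
  next
    fix a b assume h: "(a, b) \<in> Rc Ms i \<theta>"
    then have ab: "a \<in> car (Ms i)" "b \<in> car (Ms i)" and p1: "(lift Ms i a, lift Ms i b) \<in> \<theta>"
      by (auto simp: Rc_def)
    show "(inv (Ms i) a, inv (Ms i) b) \<in> Rc Ms i \<theta>"
      using cf(7)[OF p1] inv_lift[OF i ab(1)] inv_lift[OF i ab(2)] I.inv_car ab by (simp add: Rc_def)
  qed
qed

lemma R01:
  assumes th: "\<theta> \<in> Con_BI K" and ne: "\<theta> \<noteq> nabla K" and i: "i \<in> {1..t}"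
  shows "Rc Ms i \<theta> \<in> Con_BI01 (Ms i)"
proof -
  interpret I: bil "Ms i" using bil_i[OF i] .
  note cf = cong_facts[OF th]
  have "Rc Ms i \<theta> `` {bot (Ms i)} = {bot (Ms i)}"
  proof (intro equalityI subsetI)
    fix y assume "y \<in> Rc Ms i \<theta> `` {bot (Ms i)}"
    then have y: "y \<in> car (Ms i)" and "(HBot, lift Ms i y) \<in> \<theta>" by (auto simp: Rc_def lift_bot)
    then have "lift Ms i y = HBot" using bot_class[OF th ne] by blast
    then show "y \<in> {bot (Ms i)}" using lift_HBot[OF i y] by simp
  next
    fix y assume "y \<in> {bot (Ms i)}"
    then show "y \<in> Rc Ms i \<theta> `` {bot (Ms i)}" using I.bot_car cf(2) lift_car[OF i I.bot_car]
      by (auto simp: Rc_def)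
  qed
  moreover have "Rc Ms i \<theta> `` {top (Ms i)} = {top (Ms i)}"
  proof (intro equalityI subsetI)
    fix y assume "y \<in> Rc Ms i \<theta> `` {top (Ms i)}"
    then have y: "y \<in> car (Ms i)" and "(HTop, lift Ms i y) \<in> \<theta>" by (auto simp: Rc_def lift_top[OF i])
    then have "lift Ms i y = HTop" using top_class[OF th ne] by blast
    then show "y \<in> {top (Ms i)}" using lift_HTop[OF i y] by simp
  next
    fix y assume "y \<in> {top (Ms i)}"
    then show "y \<in> Rc Ms i \<theta> `` {top (Ms i)}" using I.top_car cf(2) lift_car[OF i I.top_car]
      by (auto simp: Rc_def)
  qed
  ultimately show ?thesis using R_cong[OF th i] by (simp add: Con_BI01_def)
qed

lemma Th_R:
  assumes th: "\<theta> \<in> Con_BI K" and ne: "\<theta> \<noteq> nabla K"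
  shows "Th t Ms (\<lambda>i. Rc Ms i \<theta>) = \<theta>"
proof (intro equalityI subsetI)
  fix p assume "p \<in> Th t Ms (\<lambda>i. Rc Ms i \<theta>)"
  then show "p \<in> \<theta>" by (auto simp: Th_def Rc_def)
next
  note cf = cong_facts[OF th]
  fix p assume p: "p \<in> \<theta>"
  then obtain u v where uv: "p = (u,v)" "u \<in> car K" "v \<in> car K" using cf(1) by blast
  obtain i x where ix: "i \<in> {1..t}" "x \<in> car (Ms i)" "u = lift Ms i x" using car_lift[OF uv(2)] by blast
  obtain j y where jy: "j \<in> {1..t}" "y \<in> car (Ms j)" "v = lift Ms j y" using car_lift[OF uv(3)] by blast
  interpret I: bil "Ms i" using bil_i[OF ix(1)] .
  have puv: "(u,v) \<in> \<theta>" using p uv by simp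
  show "p \<in> Th t Ms (\<lambda>i. Rc Ms i \<theta>)"
  proof (cases "x = bot (Ms i) \<or> x = top (Ms i)")
    case True
    then have "v = u" using puv bot_class[OF th ne] top_class[OF th ne] ix lift_bot lift_top by auto
    moreover have "(x,x) \<in> Rc Ms i \<theta>" using ix cf(2)[OF uv(2)] by (simp add: Rc_def)
    ultimately show ?thesis using uv ix unfolding Th_def by blast
  next
    case False
    then have ij: "i = j" using no_cross[OF th ne ix(1) jy(1) ix(2) jy(2)] puv ix jy by auto
    then have "(x,y) \<in> Rc Ms i \<theta>" using puv ix jy by (simp add: Rc_def)
    then show ?thesis using uv ix jy ij unfolding Th_def by blast
  qed
qed

end


lemma C01_cf:
  assumes "\<alpha> \<in> Con_BI01 B"
  shows "\<alpha> \<subseteq> car B \<times> car B" and "\<And>x. x \<in> car B \<Longrightarrow> (x,x) \<in> \<alpha>"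
    and "\<And>x y. (x,y) \<in> \<alpha> \<Longrightarrow> (y,x) \<in> \<alpha>"
    and "\<And>x y z. (x,y) \<in> \<alpha> \<Longrightarrow> (y,z) \<in> \<alpha> \<Longrightarrow> (x,z) \<in> \<alpha>"
    and "\<And>a b c d. (a, b) \<in> \<alpha> \<Longrightarrow> (c, d) \<in> \<alpha> \<Longrightarrow> (join B a c, join B b d) \<in> \<alpha>"
    and "\<And>a b c d. (a, b) \<in> \<alpha> \<Longrightarrow> (c, d) \<in> \<alpha> \<Longrightarrow> (meet B a c, meet B b d) \<in> \<alpha>"
    and "\<And>a b. (a, b) \<in> \<alpha> \<Longrightarrow> (inv B a, inv B b) \<in> \<alpha>"
proof -
  have "\<alpha> \<in> Con_BI B" using assms by (simp add: Con_BI01_def)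
  then show "\<alpha> \<subseteq> car B \<times> car B" and "\<And>x. x \<in> car B \<Longrightarrow> (x,x) \<in> \<alpha>"
    and "\<And>x y. (x,y) \<in> \<alpha> \<Longrightarrow> (y,x) \<in> \<alpha>"
    and "\<And>x y z. (x,y) \<in> \<alpha> \<Longrightarrow> (y,z) \<in> \<alpha> \<Longrightarrow> (x,z) \<in> \<alpha>"
    and "\<And>a b c d. (a, b) \<in> \<alpha> \<Longrightarrow> (c, d) \<in> \<alpha> \<Longrightarrow> (join B a c, join B b d) \<in> \<alpha>"
    and "\<And>a b c d. (a, b) \<in> \<alpha> \<Longrightarrow> (c, d) \<in> \<alpha> \<Longrightarrow> (meet B a c, meet B b d) \<in> \<alpha>"
    and "\<And>a b. (a, b) \<in> \<alpha> \<Longrightarrow> (inv B a, inv B b) \<in> \<alpha>"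
    unfolding ConBI_iff equiv_iff by blast+
qed

context hsl begin

lemma Th_mem: "p \<in> Th t Ms \<alpha> \<longleftrightarrow> (\<exists>i x y. i \<in> {1..t} \<and> (x,y) \<in> \<alpha> i \<and> p = (lift Ms i x, lift Ms i y))"
  by (auto simp: Th_def)

lemma Th_cong:
  assumes a: "\<alpha> \<in> PiE {1..t} (\<lambda>i. Con_BI01 (Ms i))"
  shows "Th t Ms \<alpha> \<in> Con_BI K"
proof -
  have ai: "\<And>i. i \<in> {1..t} \<Longrightarrow> \<alpha> i \<in> Con_BI01 (Ms i)" using a by auto
  note cf = C01_cf[OF ai]
  note bt = C01_facts[OF ai]
  show ?thesis
    unfolding ConBI_iff equiv_iff
  proof (intro conjI allI impI ballI)
    show "Th t Ms \<alpha> \<subseteq> car K \<times> car K"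
      using cf(1) lift_car by (force simp: Th_def)
    show "(u, u) \<in> Th t Ms \<alpha>" if uK: "u \<in> car K" for u
    proof -
      obtain i x where ix: "i \<in> {1..t}" "x \<in> car (Ms i)" "u = lift Ms i x" using car_lift[OF uK] by blast
      then show ?thesis using cf(2)[OF ix(1) ix(2)] unfolding Th_mem by blast
    qed
    show "(v, u) \<in> Th t Ms \<alpha>" if "(u, v) \<in> Th t Ms \<alpha>" for u v
      using that cf(3) unfolding Th_mem by blast
    show "(u, w) \<in> Th t Ms \<alpha>" if h1: "(u, v) \<in> Th t Ms \<alpha>" and h2: "(v, w) \<in> Th t Ms \<alpha>" for u v w
    proof -
      obtain i x y where p1: "i \<in> {1..t}" "(x,y) \<in> \<alpha> i" "u = lift Ms i x" "v = lift Ms i y"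
        using h1 unfolding Th_mem by blast
      obtain j y' z where p2: "j \<in> {1..t}" "(y',z) \<in> \<alpha> j" "v = lift Ms j y'" "w = lift Ms j z"
        using h2 unfolding Th_mem by blast
      have c: "x \<in> car (Ms i)" "y \<in> car (Ms i)" "y' \<in> car (Ms j)" "z \<in> car (Ms j)"
        using cf(1)[OF p1(1)] cf(1)[OF p2(1)] p1 p2 by auto
      have "lift Ms i y = lift Ms j y'" using p1 p2 by simp
      then have "(y = bot (Ms i) \<and> y' = bot (Ms j)) \<or> (y = top (Ms i) \<and> y' = top (Ms j)) \<or> (i = j \<and> y = y')"
        using lift_eq[OF p1(1) p2(1) c(2) c(3)] by simp
      then show ?thesis
      proof (elim disjE conjE)
        assume "y = bot (Ms i)" "y' = bot (Ms j)"
        then have "x = bot (Ms i)" "z = bot (Ms j)" using bt[OF p1(1) p1(2)] bt[OF p2(1) p2(2)] by auto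
        then have "u = lift Ms i (bot (Ms i))" "w = lift Ms i (bot (Ms i))" using p1 p2 lift_bot by auto
        moreover have "(bot (Ms i), bot (Ms i)) \<in> \<alpha> i"
          using cf(2)[OF p1(1)] bil.bot_car[OF bil_i[OF p1(1)]] by blast
        ultimately show ?thesis using p1(1) unfolding Th_mem by blast
      next
        assume "y = top (Ms i)" "y' = top (Ms j)"
        then have "x = top (Ms i)" "z = top (Ms j)" using bt[OF p1(1) p1(2)] bt[OF p2(1) p2(2)] by auto
        then have "u = lift Ms i (top (Ms i))" "w = lift Ms i (top (Ms i))"
          using p1 p2 lift_top[OF p1(1)] lift_top[OF p2(1)] by auto
        moreover have "(top (Ms i), top (Ms i)) \<in> \<alpha> i"
          using cf(2)[OF p1(1)] bil.top_car[OF bil_i[OF p1(1)]] by blast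
        ultimately show ?thesis using p1(1) unfolding Th_mem by blast
      next
        assume "i = j" "y = y'"
        then have "(x,z) \<in> \<alpha> i" using cf(4)[OF p1(1) p1(2)] p2(2) by simp
        then show ?thesis using p1 p2 \<open>i = j\<close> unfolding Th_mem by blast
      qed
    qed
  next
    fix u v u' v' assume h: "(u, v) \<in> Th t Ms \<alpha> \<and> (u', v') \<in> Th t Ms \<alpha>"
    obtain i a b where p1: "i \<in> {1..t}" "(a,b) \<in> \<alpha> i" "u = lift Ms i a" "v = lift Ms i b"
      using h unfolding Th_mem by blast
    obtain j c d where p2: "j \<in> {1..t}" "(c,d) \<in> \<alpha> j" "u' = lift Ms j c" "v' = lift Ms j d"
      using h unfolding Th_mem by blast
    have cr: "a \<in> car (Ms i)" "b \<in> car (Ms i)" "c \<in> car (Ms j)" "d \<in> car (Ms j)"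
      using cf(1)[OF p1(1)] cf(1)[OF p2(1)] p1 p2 by auto
    have b1: "(a = bot (Ms i) \<longleftrightarrow> b = bot (Ms i)) \<and> (a = top (Ms i) \<longleftrightarrow> b = top (Ms i))"
      using bt[OF p1(1) p1(2)] .
    have b2: "(c = bot (Ms j) \<longleftrightarrow> d = bot (Ms j)) \<and> (c = top (Ms j) \<longleftrightarrow> d = top (Ms j))"
      using bt[OF p2(1) p2(2)] .
    have tt: "(top (Ms i), top (Ms i)) \<in> \<alpha> i"
      using cf(2)[OF p1(1)] bil.top_car[OF bil_i[OF p1(1)]] by blast
    have bb: "(bot (Ms i), bot (Ms i)) \<in> \<alpha> i"
      using cf(2)[OF p1(1)] bil.bot_car[OF bil_i[OF p1(1)]] by blast
    have HT: "(HTop, HTop) \<in> Th t Ms \<alpha>" using tt p1(1) lift_top[OF p1(1)] unfolding Th_mem by metis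
    have HB: "(HBot, HBot) \<in> Th t Ms \<alpha>" using bb p1(1) lift_bot[of i] unfolding Th_mem by metis
    have P1: "(lift Ms i a, lift Ms i b) \<in> Th t Ms \<alpha>" using p1 unfolding Th_mem by blast
    have P2: "(lift Ms j c, lift Ms j d) \<in> Th t Ms \<alpha>" using p2 unfolding Th_mem by blast
    show "(join K u u', join K v v') \<in> Th t Ms \<alpha>"
    proof (cases "i = j")
      case True
      have m: "(join (Ms i) a c, join (Ms i) b d) \<in> \<alpha> i" using cf(5)[OF p1(1) p1(2)] p2(2) True by simp
      have e1: "join K u u' = lift Ms i (join (Ms i) a c)" using join_lift_same[OF p1(1) cr(1)] cr(3) p1 p2 True by simp
      have e2: "join K v v' = lift Ms i (join (Ms i) b d)" using join_lift_same[OF p1(1) cr(2)] cr(4) p1 p2 True by simp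
      show ?thesis unfolding e1 e2 Th_mem using m p1(1) by blast
    next
      case False
      then show ?thesis using join_lift_diff[OF p1(1) p2(1) cr(1) cr(3) False]
          join_lift_diff[OF p1(1) p2(1) cr(2) cr(4) False] b1 b2 P1 P2 HT p1 p2 by auto
    qed
    show "(meet K u u', meet K v v') \<in> Th t Ms \<alpha>"
    proof (cases "i = j")
      case True
      have m: "(meet (Ms i) a c, meet (Ms i) b d) \<in> \<alpha> i" using cf(6)[OF p1(1) p1(2)] p2(2) True by simp
      have e1: "meet K u u' = lift Ms i (meet (Ms i) a c)" using meet_lift_same[OF p1(1) cr(1)] cr(3) p1 p2 True by simp
      have e2: "meet K v v' = lift Ms i (meet (Ms i) b d)" using meet_lift_same[OF p1(1) cr(2)] cr(4) p1 p2 True by simp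
      show ?thesis unfolding e1 e2 Th_mem using m p1(1) by blast
    next
      case False
      then show ?thesis using meet_lift_diff[OF p1(1) p2(1) cr(1) cr(3) False]
          meet_lift_diff[OF p1(1) p2(1) cr(2) cr(4) False] b1 b2 P1 P2 HB p1 p2 by auto
    qed
  next
    fix u v assume h: "(u, v) \<in> Th t Ms \<alpha>"
    obtain i a b where p1: "i \<in> {1..t}" "(a,b) \<in> \<alpha> i" "u = lift Ms i a" "v = lift Ms i b"
      using h unfolding Th_mem by blast
    have cr: "a \<in> car (Ms i)" "b \<in> car (Ms i)" using cf(1)[OF p1(1)] p1 by auto
    show "(inv K u, inv K v) \<in> Th t Ms \<alpha>"
      using inv_lift[OF p1(1) cr(1)] inv_lift[OF p1(1) cr(2)] cf(7)[OF p1(1) p1(2)] p1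
      unfolding Th_mem by auto
  qed
qed

lemma R_Th:
  assumes a: "\<alpha> \<in> PiE {1..t} (\<lambda>i. Con_BI01 (Ms i))" and i: "i \<in> {1..t}"
  shows "Rc Ms i (Th t Ms \<alpha>) = \<alpha> i"
proof -
  have ai: "\<And>i. i \<in> {1..t} \<Longrightarrow> \<alpha> i \<in> Con_BI01 (Ms i)" using a by auto
  note cf = C01_cf[OF ai]
  note bt = C01_facts[OF ai]
  show ?thesis
  proof (intro equalityI subsetI)
    fix p assume "p \<in> \<alpha> i"
    then show "p \<in> Rc Ms i (Th t Ms \<alpha>)" using cf(1)[OF i] i unfolding Rc_def Th_mem by blast
  next
    fix p assume "p \<in> Rc Ms i (Th t Ms \<alpha>)"
    then obtain x y where p: "p = (x,y)" "x \<in> car (Ms i)" "y \<in> car (Ms i)"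
      "(lift Ms i x, lift Ms i y) \<in> Th t Ms \<alpha>" by (auto simp: Rc_def)
    then obtain j x' y' where q: "j \<in> {1..t}" "(x',y') \<in> \<alpha> j" "lift Ms i x = lift Ms j x'"
      "lift Ms i y = lift Ms j y'" unfolding Th_mem by blast
    have c: "x' \<in> car (Ms j)" "y' \<in> car (Ms j)" using cf(1)[OF q(1)] q by auto
    have bj: "(x' = bot (Ms j) \<longleftrightarrow> y' = bot (Ms j)) \<and> (x' = top (Ms j) \<longleftrightarrow> y' = top (Ms j))"
      using bt[OF q(1) q(2)] .
    have e1: "(x = bot (Ms i) \<and> x' = bot (Ms j)) \<or> (x = top (Ms i) \<and> x' = top (Ms j)) \<or> (i = j \<and> x = x')"
      using lift_eq[OF i q(1) p(2) c(1)] q(3) by simp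
    have e2: "(y = bot (Ms i) \<and> y' = bot (Ms j)) \<or> (y = top (Ms i) \<and> y' = top (Ms j)) \<or> (i = j \<and> y = y')"
      using lift_eq[OF i q(1) p(3) c(2)] q(4) by simp
    have bb: "(bot (Ms i), bot (Ms i)) \<in> \<alpha> i" using cf(2)[OF i] bil.bot_car[OF bil_i[OF i]] by blast
    have tt: "(top (Ms i), top (Ms i)) \<in> \<alpha> i" using cf(2)[OF i] bil.top_car[OF bil_i[OF i]] by blast
    have bnt: "bot (Ms j) \<noteq> top (Ms j)" using bot_ne_top[OF q(1)] .
    have bnt': "bot (Ms i) \<noteq> top (Ms i)" using bot_ne_top[OF i] .
    show "p \<in> \<alpha> i"
      using e1 e2 bj bb tt q(2) p(1) bnt bnt' by auto
  qed
qed

lemma Th_ext: assumes "\<And>i. i \<in> {1..t} \<Longrightarrow> \<alpha> i = \<beta> i" shows "Th t Ms \<alpha> = Th t Ms \<beta>"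
  apply (rule set_eqI) unfolding Th_mem using assms by blast

lemma Th_not_nabla:
  assumes a: "\<alpha> \<in> PiE {1..t} (\<lambda>i. Con_BI01 (Ms i))"
  shows "Th t Ms \<alpha> \<subseteq> nabla K" and "\<not> nabla K \<subseteq> Th t Ms \<alpha>"
proof -
  show "Th t Ms \<alpha> \<subseteq> nabla K" using Th_cong[OF a] unfolding ConBI_iff equiv_iff nabla_def by blast
  have ai: "\<And>i. i \<in> {1..t} \<Longrightarrow> \<alpha> i \<in> Con_BI01 (Ms i)" using a by auto
  note cf = C01_cf[OF ai]
  have "(HBot, HTop) \<notin> Th t Ms \<alpha>"
  proof
    assume "(HBot, HTop) \<in> Th t Ms \<alpha>"
    then obtain i x y where q: "i \<in> {1..t}" "(x,y) \<in> \<alpha> i" "HBot = lift Ms i x" "HTop = lift Ms i y"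
      unfolding Th_mem by blast
    have c: "x \<in> car (Ms i)" "y \<in> car (Ms i)" using cf(1)[OF q(1)] q by auto
    have "x = bot (Ms i)" "y = top (Ms i)" using q lift_HBot[OF q(1) c(1)] lift_HTop[OF q(1) c(2)] by auto
    then show False using C01_facts[OF ai[OF q(1)] q(2)] bot_ne_top[OF q(1)] by simp
  qed
  then show "\<not> nabla K \<subseteq> Th t Ms \<alpha>" using HBot_car HTop_car by (auto simp: nabla_def)
qed

lemma hs_main: "Con_BI K = Th t Ms ` PiE {1..t} (\<lambda>i. Con_BI01 (Ms i)) \<union> {nabla K}"
proof (intro equalityI subsetI)
  fix \<theta> assume th: "\<theta> \<in> Con_BI K"
  show "\<theta> \<in> Th t Ms ` PiE {1..t} (\<lambda>i. Con_BI01 (Ms i)) \<union> {nabla K}"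
  proof (cases "\<theta> = nabla K")
    case False
    let ?a = "restrict (\<lambda>i. Rc Ms i \<theta>) {1..t}"
    have "?a \<in> PiE {1..t} (\<lambda>i. Con_BI01 (Ms i))" using R01[OF th False] by auto
    moreover have "Th t Ms ?a = \<theta>" using Th_ext[of ?a "\<lambda>i. Rc Ms i \<theta>"] Th_R[OF th False] by simp
    ultimately show ?thesis by blast
  qed simp
next
  fix \<theta> assume "\<theta> \<in> Th t Ms ` PiE {1..t} (\<lambda>i. Con_BI01 (Ms i)) \<union> {nabla K}"
  then show "\<theta> \<in> Con_BI K" using Th_cong nabla_K by blast
qed

lemma Th_order:
  assumes a: "\<alpha> \<in> PiE {1..t} (\<lambda>i. Con_BI01 (Ms i))" and b: "\<beta> \<in> PiE {1..t} (\<lambda>i. Con_BI01 (Ms i))"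
  shows "Th t Ms \<alpha> \<subseteq> Th t Ms \<beta> \<longleftrightarrow> (\<forall>i\<in>{1..t}. \<alpha> i \<subseteq> \<beta> i)"
proof
  assume h: "Th t Ms \<alpha> \<subseteq> Th t Ms \<beta>"
  show "\<forall>i\<in>{1..t}. \<alpha> i \<subseteq> \<beta> i"
  proof
    fix i assume i: "i \<in> {1..t}"
    have "Rc Ms i (Th t Ms \<alpha>) \<subseteq> Rc Ms i (Th t Ms \<beta>)" using h by (auto simp: Rc_def)
    then show "\<alpha> i \<subseteq> \<beta> i" using R_Th[OF a i] R_Th[OF b i] by simp
  qed
next
  assume "\<forall>i\<in>{1..t}. \<alpha> i \<subseteq> \<beta> i"
  then show "Th t Ms \<alpha> \<subseteq> Th t Ms \<beta>" unfolding Th_def by blast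
qed

end

lemma iso_gen:
  assumes C: "C = F ` PiE {1..t} Cs \<union> {N}"
   and ord: "\<And>a b. a \<in> PiE {1..t} Cs \<Longrightarrow> b \<in> PiE {1..t} Cs \<Longrightarrow> F a \<subseteq> F b \<longleftrightarrow> (\<forall>i\<in>{1..t}. a i \<subseteq> b i)"
   and top: "\<And>a. a \<in> PiE {1..t} Cs \<Longrightarrow> F a \<subseteq> N \<and> \<not> N \<subseteq> F a"
  shows "order_iso C (\<subseteq>) (prod_plus_carrier t Cs) (prod_plus_le t)"
proof -
  define P where "P = prod_plus_carrier t Cs"
  define g where "g = (\<lambda>x. case x of None \<Rightarrow> N | Some a \<Rightarrow> F a)"
  have leq: "prod_plus_le t x y \<longleftrightarrow> g x \<subseteq> g y" if x: "x \<in> P" and y: "y \<in> P" for x y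
  proof (cases y)
    case None
    have "g x \<subseteq> N"
    proof (cases x)
      case (Some a)
      then have "a \<in> PiE {1..t} Cs" using x by (auto simp: P_def prod_plus_carrier_def)
      then show ?thesis using top Some by (simp add: g_def)
    qed (simp add: g_def)
    then show ?thesis using None by (simp add: g_def prod_plus_le_def)
  next
    case (Some b)
    show ?thesis
    proof (cases x)
      case None
      then show ?thesis using Some y top by (auto simp: g_def prod_plus_le_def P_def prod_plus_carrier_def)
    next
      case (Some a)
      have ab: "a \<in> PiE {1..t} Cs" "b \<in> PiE {1..t} Cs"
        using Some \<open>y = Some b\<close> x y by (auto simp: P_def prod_plus_carrier_def)
      have "prod_plus_le t x y \<longleftrightarrow> (\<forall>i\<in>{1..t}. a i \<subseteq> b i)"
        using Some \<open>y = Some b\<close> by (simp add: prod_plus_le_def)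
      then show ?thesis using ord[OF ab] Some \<open>y = Some b\<close> by (simp add: g_def)
    qed
  qed
  have inj: "inj_on g P"
  proof (rule inj_onI)
    fix x y assume x: "x \<in> P" and y: "y \<in> P" and e: "g x = g y"
    have l1: "prod_plus_le t x y" and l2: "prod_plus_le t y x" using leq[OF x y] leq[OF y x] e by auto
    show "x = y"
    proof (cases x)
      case None
      then show ?thesis using l1 by (simp add: prod_plus_le_def)
    next
      case (Some a)
      then obtain b where b: "y = Some b" using l2 by (auto simp: prod_plus_le_def)
      have ab: "a \<in> PiE {1..t} Cs" "b \<in> PiE {1..t} Cs"
        using Some b x y by (auto simp: P_def prod_plus_carrier_def)
      have "\<forall>i\<in>{1..t}. a i \<subseteq> b i" "\<forall>i\<in>{1..t}. b i \<subseteq> a i"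
        using l1 l2 Some b by (auto simp: prod_plus_le_def)
      then have "a = b" using PiE_ext[OF ab] by blast
      then show ?thesis using Some b by simp
    qed
  qed
  have "g ` P = (\<lambda>a. g (Some a)) ` PiE {1..t} Cs \<union> {g None}"
    by (simp add: P_def prod_plus_carrier_def image_Un image_image)
  also have "\<dots> = F ` PiE {1..t} Cs \<union> {N}" by (simp add: g_def)
  finally have img: "g ` P = C" using C by simp
  have bij: "bij_betw g P C" using inj img by (simp add: bij_betw_def)
  define h where "h = inv_into P g"
  have bh: "bij_betw h C P" unfolding h_def by (rule bij_betw_inv_into[OF bij])
  have "\<forall>x\<in>C. \<forall>y\<in>C. x \<subseteq> y \<longleftrightarrow> prod_plus_le t (h x) (h y)"
  proof (intro ballI)
    fix x y assume x: "x \<in> C" and y: "y \<in> C"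
    have hx: "h x \<in> P" "g (h x) = x"
      using inv_into_into[of x g P] f_inv_into_f[of x g P] x img unfolding h_def by auto
    have hy: "h y \<in> P" "g (h y) = y"
      using inv_into_into[of y g P] f_inv_into_f[of y g P] y img unfolding h_def by auto
    show "x \<subseteq> y \<longleftrightarrow> prod_plus_le t (h x) (h y)" using leq[OF hx(1) hy(1)] hx hy by simp
  qed
  then show ?thesis unfolding order_iso_def P_def using bh P_def by blast
qed



lemma eb_simps:
  "car (ext_bl M) = {EBot, ETop} \<union> EIn ` car M"
  "le (ext_bl M) u v = (u = EBot \<or> v = ETop \<or> (\<exists>x y. u = EIn x \<and> v = EIn y \<and> le M x y))"
  "inv (ext_bl M) u = (case u of EBot \<Rightarrow> ETop | ETop \<Rightarrow> EBot | EIn x \<Rightarrow> EIn (inv M x))"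
  by (simp_all add: ext_bl_def)

definition elub :: "'a bilat \<Rightarrow> 'a ext \<Rightarrow> 'a ext \<Rightarrow> 'a ext" where
  "elub M u v = (case u of EBot \<Rightarrow> v | ETop \<Rightarrow> ETop | EIn x \<Rightarrow>
      (case v of EBot \<Rightarrow> EIn x | ETop \<Rightarrow> ETop | EIn y \<Rightarrow> EIn (join M x y)))"

definition eglb :: "'a bilat \<Rightarrow> 'a ext \<Rightarrow> 'a ext \<Rightarrow> 'a ext" where
  "eglb M u v = (case u of ETop \<Rightarrow> v | EBot \<Rightarrow> EBot | EIn x \<Rightarrow>
      (case v of ETop \<Rightarrow> EIn x | EBot \<Rightarrow> EBot | EIn y \<Rightarrow> EIn (meet M x y)))"

definition ext_cong :: "('a \<times> 'a) set \<Rightarrow> ('a ext \<times> 'a ext) set" where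
  "ext_cong \<beta> = {(EIn x, EIn y) | x y. (x,y) \<in> \<beta>} \<union> {(EBot,EBot),(ETop,ETop)}"

definition pre_cong :: "('a ext \<times> 'a ext) set \<Rightarrow> ('a \<times> 'a) set" where
  "pre_cong \<alpha> = {(x,y). (EIn x, EIn y) \<in> \<alpha>}"

context bil begin

abbreviation "E \<equiv> ext_bl B"

lemma E_lub: "u \<in> car E \<Longrightarrow> v \<in> car E \<Longrightarrow> is_lub E u v (elub B u v)"
proof -
  assume u: "u \<in> car E" and v: "v \<in> car E"
  show ?thesis
  proof (cases u)
    case EBot then show ?thesis using v refl_le by (auto simp: is_lub_def elub_def eb_simps)
  next
    case ETop then show ?thesis by (auto simp: is_lub_def elub_def eb_simps)
  next
    case (EIn x)
    then have x: "x \<in> car B" using u by (auto simp: eb_simps)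
    show ?thesis
    proof (cases v)
      case EBot then show ?thesis using EIn x refl_le by (auto simp: is_lub_def elub_def eb_simps)
    next
      case ETop then show ?thesis using EIn by (auto simp: is_lub_def elub_def eb_simps)
    next
      case (EIn y)
      then have y: "y \<in> car B" using v by (auto simp: eb_simps)
      have j: "is_lub B x y (join B x y)" using join_prop[OF x y] .
      then show ?thesis using \<open>u = EIn x\<close> EIn unfolding is_lub_def
        by (auto simp: elub_def eb_simps)
    qed
  qed
qed

lemma E_glb: "u \<in> car E \<Longrightarrow> v \<in> car E \<Longrightarrow> is_glb E u v (eglb B u v)"
proof -
  assume u: "u \<in> car E" and v: "v \<in> car E"
  show ?thesis
  proof (cases u)
    case ETop then show ?thesis using v refl_le by (auto simp: is_glb_def eglb_def eb_simps)
  next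
    case EBot then show ?thesis by (auto simp: is_glb_def eglb_def eb_simps)
  next
    case (EIn x)
    then have x: "x \<in> car B" using u by (auto simp: eb_simps)
    show ?thesis
    proof (cases v)
      case ETop then show ?thesis using EIn x refl_le by (auto simp: is_glb_def eglb_def eb_simps)
    next
      case EBot then show ?thesis using EIn by (auto simp: is_glb_def eglb_def eb_simps)
    next
      case (EIn y)
      then have y: "y \<in> car B" using v by (auto simp: eb_simps)
      have j: "is_glb B x y (meet B x y)" using meet_prop[OF x y] .
      then show ?thesis using \<open>u = EIn x\<close> EIn unfolding is_glb_def
        by (auto simp: eglb_def eb_simps)
    qed
  qed
qed

lemma E_refl: "x \<in> car E \<Longrightarrow> le E x x"
  using refl_le by (auto simp: eb_simps)
lemma E_antisym: "x \<in> car E \<Longrightarrow> y \<in> car E \<Longrightarrow> le E x y \<Longrightarrow> le E y x \<Longrightarrow> x = y"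
proof -
  assume x: "x \<in> car E" and y: "y \<in> car E" and h: "le E x y" "le E y x"
  show "x = y"
  proof (cases x)
    case (EIn a)
    show ?thesis
    proof (cases y)
      case (EIn b)
      then show ?thesis using \<open>x = EIn a\<close> x y h antisym by (auto simp: eb_simps)
    qed (use h EIn in \<open>auto simp: eb_simps\<close>)
  qed (use h in \<open>auto simp: eb_simps\<close>)
qed
lemma E_trans: "x \<in> car E \<Longrightarrow> y \<in> car E \<Longrightarrow> z \<in> car E \<Longrightarrow> le E x y \<Longrightarrow> le E y z \<Longrightarrow> le E x z"
proof -
  assume x: "x \<in> car E" and y: "y \<in> car E" and z: "z \<in> car E" and h: "le E x y" "le E y z"
  show "le E x z"
  proof (cases x)
    case (EIn a)
    show ?thesis
    proof (cases z)
      case (EIn c)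
      obtain b where b: "y = EIn b" using h \<open>x = EIn a\<close> EIn by (cases y) (auto simp: eb_simps)
      have "le B a b" "le B b c" using h b EIn \<open>x = EIn a\<close> by (auto simp: eb_simps)
      moreover have "a \<in> car B" "b \<in> car B" "c \<in> car B" using x y z b EIn \<open>x = EIn a\<close> by (auto simp: eb_simps)
      ultimately have "le B a c" using trans_le by blast
      then show ?thesis using EIn \<open>x = EIn a\<close> by (simp add: eb_simps)
    next
      case EBot
      then show ?thesis using h \<open>x = EIn a\<close> by (cases y) (auto simp: eb_simps)
    qed (simp add: eb_simps)
  next
    case ETop
    then show ?thesis using h by (cases y) (auto simp: eb_simps)
  qed (simp add: eb_simps)
qed

lemma E_bl: "bi_lattice E"
proof -
  have "bounded_lattice_on E"
    unfolding bounded_lattice_on_def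
  proof (intro conjI)
    show "\<forall>x\<in>car E. le E x x" using E_refl by blast
    show "\<forall>x\<in>car E. \<forall>y\<in>car E. le E x y \<and> le E y x \<longrightarrow> x = y" using E_antisym by blast
    show "\<forall>x\<in>car E. \<forall>y\<in>car E. \<forall>z\<in>car E. le E x y \<and> le E y z \<longrightarrow> le E x z"
      using E_trans by blast
    show "\<forall>x\<in>car E. \<forall>y\<in>car E. (\<exists>z. is_lub E x y z) \<and> (\<exists>z. is_glb E x y z)"
      using E_lub E_glb by blast
    show "\<exists>z\<in>car E. \<forall>x\<in>car E. le E z x" by (rule bexI[of _ EBot]) (simp_all add: eb_simps)
    show "\<exists>z\<in>car E. \<forall>x\<in>car E. le E x z" by (rule bexI[of _ ETop]) (simp_all add: eb_simps)
  qed
  moreover have "\<forall>a\<in>car E. inv E a \<in> car E" using inv_car by (auto simp: eb_simps)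
  moreover have "\<forall>a\<in>car E. inv E (inv E a) = a" using inv_inv by (auto simp: eb_simps)
  moreover have "\<forall>a\<in>car E. \<forall>b\<in>car E. le E a b \<longrightarrow> le E (inv E b) (inv E a)"
    using inv_anti by (auto simp: eb_simps)
  ultimately show ?thesis unfolding bi_lattice_def by blast
qed

lemma E_bil: "bil E" using E_bl by (simp add: bil_def)

lemma E_bot: "bot E = EBot"
proof -
  have "bot E \<in> car E" "le E (bot E) EBot" using bil.bot_prop[OF E_bil] by (auto simp: eb_simps)
  then show ?thesis by (auto simp: eb_simps)
qed

lemma E_top: "top E = ETop"
proof -
  have "top E \<in> car E" "le E ETop (top E)" using bil.top_prop[OF E_bil] by (auto simp: eb_simps)
  then show ?thesis by (auto simp: eb_simps)
qed

lemma E_join: "u \<in> car E \<Longrightarrow> v \<in> car E \<Longrightarrow> join E u v = elub B u v"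
  using bil.join_eq[OF E_bil E_lub] by blast
lemma E_meet: "u \<in> car E \<Longrightarrow> v \<in> car E \<Longrightarrow> meet E u v = eglb B u v"
  using bil.meet_eq[OF E_bil E_glb] by blast

lemma E_nt: "\<exists>x\<in>car E. x \<noteq> bot E \<and> x \<noteq> top E"
  using bot_car by (auto simp: eb_simps E_bot E_top)

lemma ext_cong_C01:
  assumes b: "\<beta> \<in> Con_BI B"
  shows "ext_cong \<beta> \<in> Con_BI01 E"
proof -
  have sub: "\<beta> \<subseteq> car B \<times> car B" and rf: "\<And>x. x \<in> car B \<Longrightarrow> (x,x) \<in> \<beta>"
    and sy: "\<And>x y. (x,y) \<in> \<beta> \<Longrightarrow> (y,x) \<in> \<beta>"
    and tr: "\<And>x y z. (x,y) \<in> \<beta> \<Longrightarrow> (y,z) \<in> \<beta> \<Longrightarrow> (x,z) \<in> \<beta>"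
    and cj: "\<And>a b c d. (a, b) \<in> \<beta> \<Longrightarrow> (c, d) \<in> \<beta> \<Longrightarrow> (join B a c, join B b d) \<in> \<beta>"
    and cm: "\<And>a b c d. (a, b) \<in> \<beta> \<Longrightarrow> (c, d) \<in> \<beta> \<Longrightarrow> (meet B a c, meet B b d) \<in> \<beta>"
    and ci: "\<And>a b. (a, b) \<in> \<beta> \<Longrightarrow> (inv B a, inv B b) \<in> \<beta>"
    using b unfolding ConBI_iff equiv_iff by blast+
  have mem: "\<And>u v. (u,v) \<in> ext_cong \<beta> \<longleftrightarrow> (u = EBot \<and> v = EBot) \<or> (u = ETop \<and> v = ETop) \<or>
     (\<exists>x y. u = EIn x \<and> v = EIn y \<and> (x,y) \<in> \<beta>)"
    by (auto simp: ext_cong_def)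
  have eqv: "equiv (car E) (ext_cong \<beta>)"
    unfolding equiv_iff
  proof (intro conjI allI impI ballI)
    show "ext_cong \<beta> \<subseteq> car E \<times> car E" using sub by (auto simp: ext_cong_def eb_simps)
    show "(x, x) \<in> ext_cong \<beta>" if "x \<in> car E" for x using that rf by (auto simp: ext_cong_def eb_simps)
    show "(y, x) \<in> ext_cong \<beta>" if "(x, y) \<in> ext_cong \<beta>" for x y using that sy by (auto simp: ext_cong_def)
    show "(x, z) \<in> ext_cong \<beta>" if "(x, y) \<in> ext_cong \<beta>" "(y, z) \<in> ext_cong \<beta>" for x y z
      using that tr unfolding mem by blast
  qed
  have cong: "\<forall>a b c d. (a, b) \<in> ext_cong \<beta> \<and> (c, d) \<in> ext_cong \<beta> \<longrightarrow>
        (join E a c, join E b d) \<in> ext_cong \<beta> \<and> (meet E a c, meet E b d) \<in> ext_cong \<beta>"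
  proof (intro allI impI)
    fix a b c d assume h: "(a, b) \<in> ext_cong \<beta> \<and> (c, d) \<in> ext_cong \<beta>"
    then have cr: "a \<in> car E" "b \<in> car E" "c \<in> car E" "d \<in> car E" using eqv unfolding equiv_iff by blast+
    have h1: "(a = EBot \<and> b = EBot) \<or> (a = ETop \<and> b = ETop) \<or> (\<exists>x y. a = EIn x \<and> b = EIn y \<and> (x,y) \<in> \<beta>)"
      using h mem by blast
    have h2: "(c = EBot \<and> d = EBot) \<or> (c = ETop \<and> d = ETop) \<or> (\<exists>x y. c = EIn x \<and> d = EIn y \<and> (x,y) \<in> \<beta>)"
      using h mem by blast
    show "(join E a c, join E b d) \<in> ext_cong \<beta> \<and> (meet E a c, meet E b d) \<in> ext_cong \<beta>"
      unfolding E_join[OF cr(1) cr(3)] E_join[OF cr(2) cr(4)] E_meet[OF cr(1) cr(3)] E_meet[OF cr(2) cr(4)]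
      using h1 h2 h cj cm by (auto simp: elub_def eglb_def mem)
  qed
  have inv: "\<forall>a b. (a, b) \<in> ext_cong \<beta> \<longrightarrow> (inv E a, inv E b) \<in> ext_cong \<beta>"
    using ci by (auto simp: mem eb_simps)
  have "ext_cong \<beta> `` {EBot} = {EBot}" "ext_cong \<beta> `` {ETop} = {ETop}" by (auto simp: ext_cong_def)
  then show ?thesis using eqv cong inv unfolding Con_BI01_def ConBI_iff E_bot E_top by blast
qed

lemma ext_cong_mono: "ext_cong \<beta> \<subseteq> ext_cong \<beta>' \<longleftrightarrow> \<beta> \<subseteq> \<beta>'"
  by (auto simp: ext_cong_def)

lemma pre_cong_prop:
  assumes a: "\<alpha> \<in> Con_BI01 E"
  shows "pre_cong \<alpha> \<in> Con_BI B" and "ext_cong (pre_cong \<alpha>) = \<alpha>"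
proof -
  note cf = C01_cf[OF a]
  have bb: "\<And>y. (EBot, y) \<in> \<alpha> \<Longrightarrow> y = EBot" and tt: "\<And>y. (ETop, y) \<in> \<alpha> \<Longrightarrow> y = ETop"
    using C01_facts[OF a] E_bot E_top by metis+
  show "ext_cong (pre_cong \<alpha>) = \<alpha>"
  proof (intro equalityI subsetI)
    fix p assume "p \<in> ext_cong (pre_cong \<alpha>)"
    then show "p \<in> \<alpha>" using cf(2) by (auto simp: ext_cong_def pre_cong_def eb_simps)
  next
    fix p assume p: "p \<in> \<alpha>"
    then obtain u v where uv: "p = (u,v)" "u \<in> car E" "v \<in> car E" using cf(1) by blast
    show "p \<in> ext_cong (pre_cong \<alpha>)"
    proof (cases u)
      case EBot then show ?thesis using bb p uv by (auto simp: ext_cong_def)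
    next
      case ETop then show ?thesis using tt p uv by (auto simp: ext_cong_def)
    next
      case (EIn x)
      have "v \<noteq> EBot" using bb cf(3) p uv EIn by blast
      moreover have "v \<noteq> ETop" using tt cf(3) p uv EIn by blast
      ultimately obtain y where "v = EIn y" using uv by (auto simp: eb_simps)
      then show ?thesis using p uv EIn by (auto simp: ext_cong_def pre_cong_def)
    qed
  qed
  show "pre_cong \<alpha> \<in> Con_BI B"
    unfolding ConBI_iff equiv_iff
  proof (intro conjI allI impI ballI)
    show "pre_cong \<alpha> \<subseteq> car B \<times> car B" using cf(1) by (auto simp: pre_cong_def eb_simps)
    show "(x, x) \<in> pre_cong \<alpha>" if "x \<in> car B" for x using that cf(2) by (auto simp: pre_cong_def eb_simps)
    show "(y, x) \<in> pre_cong \<alpha>" if "(x, y) \<in> pre_cong \<alpha>" for x y using that cf(3) by (auto simp: pre_cong_def)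
    show "(x, z) \<in> pre_cong \<alpha>" if "(x, y) \<in> pre_cong \<alpha>" "(y, z) \<in> pre_cong \<alpha>" for x y z
      using that cf(4) by (auto simp: pre_cong_def)
  next
    fix a b c d assume h: "(a, b) \<in> pre_cong \<alpha> \<and> (c, d) \<in> pre_cong \<alpha>"
    then have p1: "(EIn a, EIn b) \<in> \<alpha>" and p2: "(EIn c, EIn d) \<in> \<alpha>" by (auto simp: pre_cong_def)
    have cr: "EIn a \<in> car E" "EIn b \<in> car E" "EIn c \<in> car E" "EIn d \<in> car E" using p1 p2 cf(1) by blast+
    show "(join B a c, join B b d) \<in> pre_cong \<alpha>"
      using cf(5)[OF p1 p2] E_join[OF cr(1) cr(3)] E_join[OF cr(2) cr(4)] by (simp add: elub_def pre_cong_def)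
    show "(meet B a c, meet B b d) \<in> pre_cong \<alpha>"
      using cf(6)[OF p1 p2] E_meet[OF cr(1) cr(3)] E_meet[OF cr(2) cr(4)] by (simp add: eglb_def pre_cong_def)
  next
    fix a b assume h: "(a, b) \<in> pre_cong \<alpha>"
    then have p1: "(EIn a, EIn b) \<in> \<alpha>" by (auto simp: pre_cong_def)
    show "(inv B a, inv B b) \<in> pre_cong \<alpha>" using cf(7)[OF p1] by (simp add: eb_simps pre_cong_def)
  qed
qed

end


lemma in_same_class: "equiv A r \<Longrightarrow> (\<exists>C\<in>A//r. x \<in> C \<and> y \<in> C) \<longleftrightarrow> (x,y) \<in> r"
proof
  assume e: "equiv A r"
  assume "\<exists>C\<in>A//r. x \<in> C \<and> y \<in> C"
  then obtain C where C: "C \<in> A//r" "x \<in> C" "y \<in> C" by blast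
  then obtain a where "C = r``{a}" "a \<in> A" by (auto elim: quotientE)
  then have "(a,x) \<in> r" "(a,y) \<in> r" using C by auto
  then show "(x,y) \<in> r" using e unfolding equiv_iff by blast
next
  assume e: "equiv A r" and xy: "(x,y) \<in> r"
  then have "x \<in> A" unfolding equiv_iff by blast
  then have "r``{x} \<in> A//r" by (rule quotientI)
  moreover have "x \<in> r``{x}" "y \<in> r``{x}" using e xy \<open>x \<in> A\<close> unfolding equiv_iff by blast+
  ultimately show "\<exists>C\<in>A//r. x \<in> C \<and> y \<in> C" by blast
qed

lemma class_of: "equiv A r \<Longrightarrow> C \<in> A//r \<Longrightarrow> x \<in> C \<Longrightarrow> C = r``{x}"
proof -
  assume e: "equiv A r" and C: "C \<in> A//r" "x \<in> C"
  then obtain a where a: "C = r``{a}" "a \<in> A" by (auto elim: quotientE)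
  then have "(a,x) \<in> r" using C by auto
  then show ?thesis using a equiv_class_eq[OF e] by simp
qed

lemma eq_of_mem: "(u,v) \<in> eq_of \<pi> \<longleftrightarrow> (\<exists>C\<in>\<pi>. u \<in> C \<and> v \<in> C)"
  by (simp add: eq_of_def)

context hsl begin

lemma hsum_cong_Th:
  assumes a: "\<alpha> \<in> PiE {1..t} (\<lambda>i. Con_BI01 (Ms i))"
  shows "hsum_cong t Ms \<alpha> = Th t Ms \<alpha>"
proof -
  have ai: "\<And>i. i \<in> {1..t} \<Longrightarrow> \<alpha> i \<in> Con_BI01 (Ms i)" using a by auto
  note cf = C01_cf[OF ai]
  have eqi: "equiv (car (Ms i)) (\<alpha> i)" if i: "i \<in> {1..t}" for i
    unfolding equiv_iff using cf(1-4)[OF i] by blast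
  have bc: "\<alpha> i `` {bot (Ms i)} = {bot (Ms i)}" if i: "i \<in> {1..t}" for i
    using ai[OF i] by (simp add: Con_BI01_def)
  have tc: "\<alpha> i `` {top (Ms i)} = {top (Ms i)}" if i: "i \<in> {1..t}" for i
    using ai[OF i] by (simp add: Con_BI01_def)
  note bt = C01_facts[OF ai]
  have e1: "(\<Union>i\<in>{1..t}. HEl i ` (\<alpha> i `` {bot (Ms i)} - {bot (Ms i)})) = {}" using bc by auto
  have e2: "(\<Union>i\<in>{1..t}. HEl i ` (\<alpha> i `` {top (Ms i)} - {top (Ms i)})) = {}" using tc by auto
  define \<pi> where "\<pi> = {{HBot}, {HTop}} \<union> (\<Union>i\<in>{1..t}. (\<lambda>C. HEl i ` C) `
            ((car (Ms i) // \<alpha> i) - {{bot (Ms i)}, {top (Ms i)}}))"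
  have hc: "hsum_cong t Ms \<alpha> = eq_of \<pi>"
    unfolding hsum_cong_def \<pi>_def e1 e2
    apply (rule arg_cong[where f = eq_of])
    apply (rule arg_cong2[where f = "(\<union>)"], simp)
    apply (rule SUP_cong, simp)
    using bc tc by simp
  have interior: "x \<noteq> bot (Ms i) \<and> x \<noteq> top (Ms i)"
    if i: "i \<in> {1..t}" and C: "C \<in> car (Ms i) // \<alpha> i" "C \<noteq> {bot (Ms i)}" "C \<noteq> {top (Ms i)}"
      and x: "x \<in> C" for i C x
  proof -
    have Cx: "C = \<alpha> i `` {x}" using class_of[OF eqi[OF i] C(1) x] .
    show ?thesis
    proof (intro conjI notI)
      assume "x = bot (Ms i)" then show False using Cx bc[OF i] C(2) by simp
    next
      assume "x = top (Ms i)" then show False using Cx tc[OF i] C(3) by simp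
    qed
  qed
  show ?thesis
    unfolding hc
  proof (intro equalityI subsetI)
    fix p assume p: "p \<in> eq_of \<pi>"
    obtain u v where uv: "p = (u,v)" using prod.exhaust by blast
    have "(u,v) \<in> eq_of \<pi>" using p uv by simp
    then obtain C where C: "C \<in> \<pi>" "u \<in> C" "v \<in> C" unfolding eq_of_mem by blast
    have bb: "(bot (Ms 1), bot (Ms 1)) \<in> \<alpha> 1" using cf(2)[OF one_in] bil.bot_car[OF bil_i[OF one_in]] by blast
    have tt: "(top (Ms 1), top (Ms 1)) \<in> \<alpha> 1" using cf(2)[OF one_in] bil.top_car[OF bil_i[OF one_in]] by blast
    show "p \<in> Th t Ms \<alpha>"
    proof (cases "C = {HBot} \<or> C = {HTop}")
      case True
      then have "u = v \<and> (u = HBot \<or> u = HTop)" using C by auto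
      then have "p = (lift Ms 1 (bot (Ms 1)), lift Ms 1 (bot (Ms 1))) \<or>
                 p = (lift Ms 1 (top (Ms 1)), lift Ms 1 (top (Ms 1)))"
        using uv lift_bot[of 1] lift_top[OF one_in] by auto
      then show ?thesis using bb tt one_in unfolding Th_mem by blast
    next
      case False
      then obtain i D where D: "i \<in> {1..t}" "D \<in> car (Ms i) // \<alpha> i" "D \<noteq> {bot (Ms i)}" "D \<noteq> {top (Ms i)}"
        "C = HEl i ` D" using C(1) unfolding \<pi>_def by blast
      obtain x y where xy: "u = HEl i x" "v = HEl i y" "x \<in> D" "y \<in> D" using C D by blast
      have "(x,y) \<in> \<alpha> i" using in_same_class[OF eqi[OF D(1)]] D xy by blast
      moreover have "lift Ms i x = HEl i x" "lift Ms i y = HEl i y"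
        using interior[OF D(1-4)] xy by (auto simp: lift_def)
      ultimately show ?thesis using uv xy D(1) unfolding Th_mem by metis
    qed
  next
    fix p assume "p \<in> Th t Ms \<alpha>"
    then obtain i x y where q: "i \<in> {1..t}" "(x,y) \<in> \<alpha> i" "p = (lift Ms i x, lift Ms i y)"
      unfolding Th_mem by blast
    have c: "x \<in> car (Ms i)" "y \<in> car (Ms i)" using cf(1)[OF q(1)] q(2) by blast+
    show "p \<in> eq_of \<pi>"
    proof (cases "x = bot (Ms i) \<or> x = top (Ms i)")
      case True
      then have "(x = bot (Ms i) \<and> y = bot (Ms i)) \<or> (x = top (Ms i) \<and> y = top (Ms i))"
        using bt[OF q(1) q(2)] by blast
      then have "p = (HBot, HBot) \<or> p = (HTop, HTop)"
        by (elim disjE conjE) (simp_all add: lift_bot lift_top[OF q(1)] q(3))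
      moreover have "{HBot} \<in> \<pi>" "{HTop} \<in> \<pi>" unfolding \<pi>_def by auto
      ultimately show ?thesis by (metis eq_of_mem singletonI)
    next
      case False
      then have yi: "y \<noteq> bot (Ms i) \<and> y \<noteq> top (Ms i)" using bt[OF q(1) q(2)] by blast
      let ?D = "\<alpha> i `` {x}"
      have D: "?D \<in> car (Ms i) // \<alpha> i" using c(1) by (rule quotientI)
      have xyD: "x \<in> ?D" "y \<in> ?D" using cf(2)[OF q(1) c(1)] q(2) by auto
      have "?D \<noteq> {bot (Ms i)}" "?D \<noteq> {top (Ms i)}" using xyD False by auto
      then have "HEl i ` ?D \<in> \<pi>" using D q(1) unfolding \<pi>_def by blast
      moreover have "p = (HEl i x, HEl i y)" using q(3) False yi by (simp add: lift_def)
      moreover have "HEl i x \<in> HEl i ` ?D" "HEl i y \<in> HEl i ` ?D" using xyD by auto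
      ultimately show ?thesis using eq_of_mem by metis
    qed
  qed
qed

end



lemma Th_mem_g: "p \<in> Th t Ms \<alpha> \<longleftrightarrow> (\<exists>i x y. i \<in> {1..t} \<and> (x,y) \<in> \<alpha> i \<and> p = (lift Ms i x, lift Ms i y))"
  by (auto simp: Th_def)

lemma ext_cong_mono_g: "ext_cong \<beta> \<subseteq> ext_cong \<beta>' \<longleftrightarrow> \<beta> \<subseteq> \<beta>'"
  by (auto simp: ext_cong_def)

lemma lift_ext:
  assumes "bi_lattice L" and "Ms' i = ext_bl L"
  shows "lift Ms' i u = (case u of EBot \<Rightarrow> HBot | ETop \<Rightarrow> HTop | EIn x \<Rightarrow> HEl i (EIn x))"
proof -
  have bl: "bil L" using assms(1) by (simp add: bil_def)
  have b: "bot (Ms' i) = EBot" "top (Ms' i) = ETop" using bil.E_bot[OF bl] bil.E_top[OF bl] assms(2) by simp_all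
  show ?thesis by (cases u) (simp_all add: lift_def b)
qed

lemma eq2:
  assumes bl: "\<forall>i\<in>{1..t}. bi_lattice (Ls i)" and b: "\<beta> \<in> PiE {1..t} (\<lambda>i. Con_BI (Ls i))" and t1: "1 \<le> t"
  shows "eq_of ({{HBot}, {HTop}} \<union>
            (\<Union>i\<in>{1..t}. (\<lambda>C. (\<lambda>x. HEl i (EIn x)) ` C) ` (car (Ls i) // \<beta> i)))
       = Th t (\<lambda>i. ext_bl (Ls i)) (\<lambda>i. ext_cong (\<beta> i))"
  (is "eq_of ?\<pi> = Th t ?Ms ?a")
proof -
  have lx: "lift ?Ms i u = (case u of EBot \<Rightarrow> HBot | ETop \<Rightarrow> HTop | EIn x \<Rightarrow> HEl i (EIn x))"
    if i: "i \<in> {1..t}" for i u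
    by (rule lift_ext[of "Ls i"]) (use bl i in simp_all)
  have bi: "\<And>i. i \<in> {1..t} \<Longrightarrow> \<beta> i \<in> Con_BI (Ls i)" using b by auto
  have eqi: "\<And>i. i \<in> {1..t} \<Longrightarrow> equiv (car (Ls i)) (\<beta> i)" using bi unfolding ConBI_iff by blast
  have one: "1 \<in> {1..t}" using t1 by simp
  define \<pi> where "\<pi> = ?\<pi>"
  show ?thesis unfolding \<pi>_def[symmetric]
  proof (intro equalityI subsetI)
    fix p assume p: "p \<in> eq_of \<pi>"
    obtain u v where uv: "p = (u,v)" using prod.exhaust by blast
    have "(u,v) \<in> eq_of \<pi>" using p uv by simp
    then obtain C where C: "C \<in> \<pi>" "u \<in> C" "v \<in> C" unfolding eq_of_mem by blast
    show "p \<in> Th t ?Ms ?a"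
    proof (cases "C = {HBot} \<or> C = {HTop}")
      case True
      then have "u = v \<and> (u = HBot \<or> u = HTop)" using C by auto
      then have "p = (lift ?Ms 1 EBot, lift ?Ms 1 EBot) \<or> p = (lift ?Ms 1 ETop, lift ?Ms 1 ETop)"
        using uv lx[OF one] by auto
      moreover have "(EBot, EBot) \<in> ?a 1" "(ETop, ETop) \<in> ?a 1" by (auto simp: ext_cong_def)
      ultimately show ?thesis using one unfolding Th_mem_g by blast
    next
      case False
      then obtain i D where D: "i \<in> {1..t}" "D \<in> car (Ls i) // \<beta> i" "C = (\<lambda>x. HEl i (EIn x)) ` D"
        using C(1) unfolding \<pi>_def by blast
      obtain x y where xy: "u = HEl i (EIn x)" "v = HEl i (EIn y)" "x \<in> D" "y \<in> D" using C D by blast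
      have "(x,y) \<in> \<beta> i" using in_same_class[OF eqi[OF D(1)]] D xy by blast
      then have "(EIn x, EIn y) \<in> ?a i" by (auto simp: ext_cong_def)
      moreover have "lift ?Ms i (EIn x) = u" "lift ?Ms i (EIn y) = v" using lx[OF D(1)] xy by auto
      ultimately show ?thesis using uv D(1) unfolding Th_mem_g by metis
    qed
  next
    fix p assume "p \<in> Th t ?Ms ?a"
    then obtain i a c where q: "i \<in> {1..t}" "(a,c) \<in> ?a i" "p = (lift ?Ms i a, lift ?Ms i c)"
      unfolding Th_mem_g by blast
    have q2: "(a = EBot \<and> c = EBot) \<or> (a = ETop \<and> c = ETop) \<or> (\<exists>x y. a = EIn x \<and> c = EIn y \<and> (x,y) \<in> \<beta> i)"
      using q(2) by (auto simp: ext_cong_def)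
    have hb: "{HBot} \<in> \<pi>" "{HTop} \<in> \<pi>" unfolding \<pi>_def by blast+
    show "p \<in> eq_of \<pi>"
    proof (cases "\<exists>x y. a = EIn x \<and> c = EIn y \<and> (x,y) \<in> \<beta> i")
      case True
      then obtain x y where xy: "a = EIn x" "c = EIn y" "(x,y) \<in> \<beta> i" by blast
      have x: "x \<in> car (Ls i)" using eqi[OF q(1)] xy(3) unfolding equiv_iff by blast
      let ?D = "\<beta> i `` {x}"
      have D: "?D \<in> car (Ls i) // \<beta> i" using x by (rule quotientI)
      have xyD: "x \<in> ?D" "y \<in> ?D" using eqi[OF q(1)] x xy(3) unfolding equiv_iff by blast+
      have "(\<lambda>x. HEl i (EIn x)) ` ?D \<in> \<pi>" using D q(1) unfolding \<pi>_def by blast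
      moreover have "p = (HEl i (EIn x), HEl i (EIn y))" using q(3) xy lx[OF q(1)] by simp
      moreover have "HEl i (EIn x) \<in> (\<lambda>x. HEl i (EIn x)) ` ?D" "HEl i (EIn y) \<in> (\<lambda>x. HEl i (EIn x)) ` ?D"
        using xyD by auto
      ultimately show ?thesis using eq_of_mem by metis
    next
      case False
      then have "p = (HBot, HBot) \<or> p = (HTop, HTop)" using q2 q(3) lx[OF q(1)] by auto
      then show ?thesis using hb by (metis eq_of_mem singletonI)
    qed
  qed
qed

lemma nt_K:
  assumes "bi_lattice K" "\<not> (finite (car K) \<and> card (car K) \<le> 2)"
  shows "\<exists>x\<in>car K. x \<noteq> bot K \<and> x \<noteq> top K"
proof (rule ccontr)
  assume "\<not> ?thesis"
  then have "car K \<subseteq> {bot K, top K}" by blast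
  moreover have "finite {bot K, top K}" "card {bot K, top K} \<le> 2" by (auto simp: card_insert_if)
  ultimately have "finite (car K) \<and> card (car K) \<le> 2" using card_mono finite_subset by (metis order_trans)
  then show False using assms(2) by blast
qed

theorem proposition4p21:
  fixes t :: nat
    and Ks :: "nat \<Rightarrow> 'a bilat"
    and Ls :: "nat \<Rightarrow> 'b bilat"
  assumes "t \<ge> 2"
    and "\<forall>i\<in>{1..t}. bi_lattice (Ks i)"
    and "\<forall>i\<in>{1..t}. bi_lattice (Ls i)"
    and "\<forall>i\<in>{1..t}. \<not> (finite (car (Ks i)) \<and> card (car (Ks i)) \<le> 2)"
  shows
   "Con_BI (hsum t Ks) =
        {hsum_cong t Ks \<alpha>s | \<alpha>s. \<alpha>s \<in> PiE {1..t} (\<lambda>i. Con_BI01 (Ks i))} \<union> {nabla (hsum t Ks)}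
    \<and> order_iso (Con_BI (hsum t Ks)) (\<subseteq>)
        (prod_plus_carrier t (\<lambda>i. Con_BI01 (Ks i))) (prod_plus_le t)
    \<and> Con_BI (hsum t (\<lambda>i. ext_bl (Ls i))) =
        {eq_of ({{HBot}, {HTop}} \<union>
            (\<Union>i\<in>{1..t}. (\<lambda>C. (\<lambda>x. HEl i (EIn x)) ` C) ` (car (Ls i) // \<alpha>s i)))
          | \<alpha>s. \<alpha>s \<in> PiE {1..t} (\<lambda>i. Con_BI (Ls i))}
        \<union> {nabla (hsum t (\<lambda>i. ext_bl (Ls i)))}
    \<and> order_iso (Con_BI (hsum t (\<lambda>i. ext_bl (Ls i)))) (\<subseteq>)
        (prod_plus_carrier t (\<lambda>i. Con_BI (Ls i))) (prod_plus_le t)"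
proof -
  have hK: "hsl t Ks"
    unfolding hsl_def using assms(1,2,4) nt_K by blast
  have hL: "hsl t (\<lambda>i. ext_bl (Ls i))"
    unfolding hsl_def using assms(1,3) bil.E_bl bil.E_nt by (auto simp: bil_def)
  interpret HK: hsl t Ks by (rule hK)
  interpret HL: hsl t "\<lambda>i. ext_bl (Ls i)" by (rule hL)
  let ?P1 = "PiE {1..t} (\<lambda>i. Con_BI01 (Ks i))"
  have s1: "{hsum_cong t Ks \<alpha>s | \<alpha>s. \<alpha>s \<in> ?P1} = Th t Ks ` ?P1"
    using HK.hsum_cong_Th by auto
  have c1: "Con_BI (hsum t Ks) = {hsum_cong t Ks \<alpha>s | \<alpha>s. \<alpha>s \<in> ?P1} \<union> {nabla (hsum t Ks)}"
    using HK.hs_main s1 by simp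
  have i1: "order_iso (Con_BI (hsum t Ks)) (\<subseteq>) (prod_plus_carrier t (\<lambda>i. Con_BI01 (Ks i))) (prod_plus_le t)"
    by (rule iso_gen[OF HK.hs_main HK.Th_order]) (use HK.Th_not_nabla in blast)+
  let ?Ms = "\<lambda>i. ext_bl (Ls i)"
  let ?P2 = "PiE {1..t} (\<lambda>i. Con_BI (Ls i))"
  let ?P2' = "PiE {1..t} (\<lambda>i. Con_BI01 (?Ms i))"
  define F where "F = (\<lambda>\<beta>. Th t ?Ms (\<lambda>i. ext_cong (\<beta> i)))"
  have bil_L: "\<And>i. i \<in> {1..t} \<Longrightarrow> bil (Ls i)" using assms(3) by (simp add: bil_def)
  have rP: "restrict (\<lambda>i. ext_cong (\<beta> i)) {1..t} \<in> ?P2'" if b: "\<beta> \<in> ?P2" for \<beta>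
    unfolding restrict_PiE_iff
  proof
    fix i assume i: "i \<in> {1..t}"
    then have "\<beta> i \<in> Con_BI (Ls i)" using b by (simp add: PiE_iff)
    then show "ext_cong (\<beta> i) \<in> Con_BI01 (ext_bl (Ls i))" using bil.ext_cong_C01[OF bil_L[OF i]] by blast
  qed
  have Fr: "F \<beta> = Th t ?Ms (restrict (\<lambda>i. ext_cong (\<beta> i)) {1..t})" for \<beta>
    unfolding F_def by (rule HL.Th_ext) simp
  have img: "Th t ?Ms ` ?P2' = F ` ?P2"
  proof (intro equalityI subsetI)
    fix \<theta> assume "\<theta> \<in> Th t ?Ms ` ?P2'"
    then obtain \<alpha> where a: "\<alpha> \<in> ?P2'" "\<theta> = Th t ?Ms \<alpha>" by blast
    have ai: "\<And>i. i \<in> {1..t} \<Longrightarrow> \<alpha> i \<in> Con_BI01 (ext_bl (Ls i))" using a by auto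
    let ?b = "restrict (\<lambda>i. pre_cong (\<alpha> i)) {1..t}"
    have "?b \<in> ?P2" using bil.pre_cong_prop(1)[OF bil_L ai] by auto
    moreover have "F ?b = \<theta>" unfolding F_def a(2)
      by (rule HL.Th_ext) (use bil.pre_cong_prop(2)[OF bil_L ai] in simp)
    ultimately show "\<theta> \<in> F ` ?P2" by blast
  next
    fix \<theta> assume "\<theta> \<in> F ` ?P2"
    then obtain \<beta> where b: "\<beta> \<in> ?P2" "\<theta> = F \<beta>" by blast
    then show "\<theta> \<in> Th t ?Ms ` ?P2'" using rP[OF b(1)] Fr by blast
  qed
  have main2: "Con_BI (hsum t ?Ms) = F ` ?P2 \<union> {nabla (hsum t ?Ms)}"
    using HL.hs_main img by simp
  have s2: "{eq_of ({{HBot}, {HTop}} \<union>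
            (\<Union>i\<in>{1..t}. (\<lambda>C. (\<lambda>x. HEl i (EIn x)) ` C) ` (car (Ls i) // \<alpha>s i)))
          | \<alpha>s. \<alpha>s \<in> ?P2} = F ` ?P2"
    using eq2[OF assms(3)] assms(1) unfolding F_def by auto
  have c2: "Con_BI (hsum t ?Ms) = {eq_of ({{HBot}, {HTop}} \<union>
            (\<Union>i\<in>{1..t}. (\<lambda>C. (\<lambda>x. HEl i (EIn x)) ` C) ` (car (Ls i) // \<alpha>s i)))
          | \<alpha>s. \<alpha>s \<in> ?P2} \<union> {nabla (hsum t ?Ms)}"
    using main2 s2 by simp
  have i2: "order_iso (Con_BI (hsum t ?Ms)) (\<subseteq>) (prod_plus_carrier t (\<lambda>i. Con_BI (Ls i))) (prod_plus_le t)"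
  proof (rule iso_gen[OF main2])
    fix a b assume a: "a \<in> ?P2" and b: "b \<in> ?P2"
    have "F a \<subseteq> F b \<longleftrightarrow> (\<forall>i\<in>{1..t}. restrict (\<lambda>i. ext_cong (a i)) {1..t} i \<subseteq> restrict (\<lambda>i. ext_cong (b i)) {1..t} i)"
      unfolding Fr by (rule HL.Th_order[OF rP[OF a] rP[OF b]])
    also have "\<dots> \<longleftrightarrow> (\<forall>i\<in>{1..t}. a i \<subseteq> b i)" 
    proof (rule ball_cong[OF refl])
      fix i assume i: "i \<in> {1..t}"
      show "(restrict (\<lambda>i. ext_cong (a i)) {1..t} i \<subseteq> restrict (\<lambda>i. ext_cong (b i)) {1..t} i) = (a i \<subseteq> b i)"
        using ext_cong_mono_g[of "a i" "b i"] i by simp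
    qed
    finally show "F a \<subseteq> F b \<longleftrightarrow> (\<forall>i\<in>{1..t}. a i \<subseteq> b i)" .
  next
    fix a assume a: "a \<in> ?P2"
    show "F a \<subseteq> nabla (hsum t ?Ms) \<and> \<not> nabla (hsum t ?Ms) \<subseteq> F a"
      unfolding Fr using HL.Th_not_nabla[OF rP[OF a]] by blast
  qed
  show ?thesis using c1 i1 c2 i2 by blast
qed


end
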